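(* Let $(\mathcal{Y},\Theta,k)$ be one of: $\mathcal{Y}=\Theta=\mathbb{R}$ with the Gaussian kernel; $\mathcal{Y}=\Theta=\mathbb{R}_+$ with the Gamma kernel; $\mathcal{Y}=\Theta=[0,1]$ with the Beta kernel. The mixture map $T_k:D_k\to\mathcal{D}(\mathcal{Y})$, $T_kG(y)=\int_{\Theta\times\mathbb{R}_+}k(y\mid\theta,\phi)\,dG(\theta,\phi)$, is measurable, where $D_k$ carries the Borel $\sigma$-algebra of the weak topology and $\mathcal{D}(\mathcal{Y})$ the Borel $\sigma$-algebra of the Hellinger distance.
   Context: Kernels: Gaussian $k(y\mid\theta,\phi)=(2\pi\phi)^{-1/2}e^{-(y-\theta)^2/(2\phi)}$; Gamma $k(y\mid\theta,\phi)=\frac{(\phi/\theta)^\phi}{\Gamma(\phi)}y^{\phi-1}e^{-\phi y/\theta}$; Beta $k(y\mid\theta,\phi)=\frac{\Gamma(\phi)}{\Gamma(\theta\phi)\Gamma((1-\theta)\phi)}y^{\theta\phi-1}(1-y)^{(1-\theta)\phi-1}$. $\Gamma=\Theta\times\mathbb{R}_+$ with $\mathbb{R}_+=[0,\infty)$. $\Gamma_k^0=\Theta\times\{0\}$ for the Gaussian and Gamma kernels and $\Gamma_k^0=\Theta\times\{0\}\cup\{0,1\}\times\mathbb{R}_+$ for the Beta kernel. $D_k=\{G\in\mathcal{P}(\Gamma):G(\Gamma_k^0)=0\}$, a subset of the Borel probability measures on $\Gamma$ with the subspace weak topology. $\mathcal{D}(\mathcal{Y})$ is the set of probability densities on $\mathcal{Y}$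 w.r.t. Lebesgue measure with Hellinger distance $\mathcal{H}_d(f_1,f_2)=(\frac12\int(\sqrt{f_1}-\sqrt{f_2})^2)^{1/2}$. *)

theory Defs
  imports "HOL-Probability.Probability"
begin

definition gauss_kernel :: "real \<Rightarrow> real \<times> real \<Rightarrow> real" where
  "gauss_kernel y p = (case p of (\<theta>, \<phi>) \<Rightarrow>
     (2 * pi * \<phi>) powr (-1/2) * exp (- ((y - \<theta>)^2) / (2 * \<phi>)))"

definition gamma_kernel :: "real \<Rightarrow> real \<times> real \<Rightarrow> real" where
  "gamma_kernel y p = (case p of (\<theta>, \<phi>) \<Rightarrow>
     (\<phi> / \<theta>) powr \<phi> / Gamma \<phi> * y powr (\<phi> - 1) * exp (- \<phi> * y / \<theta>))"

definition beta_kernel :: "real \<Rightarrow> real \<times> real \<Rightarrow> real" where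
  "beta_kernel y p = (case p of (\<theta>, \<phi>) \<Rightarrow>
     Gamma \<phi> / (Gamma (\<theta> * \<phi>) * Gamma ((1 - \<theta>) * \<phi>))
       * y powr (\<theta> * \<phi> - 1) * (1 - y) powr ((1 - \<theta>) * \<phi> - 1))"

definition param_space :: "real set \<Rightarrow> (real \<times> real) set" where
  "param_space \<Theta> = \<Theta> \<times> {0..}"

definition prob_measures :: "(real \<times> real) set \<Rightarrow> (real \<times> real) measure set" where
  "prob_measures \<Gamma> = {G. sets G = sets (restrict_space borel \<Gamma>) \<and> prob_space G}"

definition weak_conv_topology :: "(real \<times> real) set \<Rightarrow> (real \<times> real) measure topology" where
  "weak_conv_topology \<Gamma> = topology_generated_by
     {{G \<in> prob_measures \<Gamma>. (\<integral>x. f x \<partial>G) \<in> U} | f U.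
        continuous_on \<Gamma> (f :: real \<times> real \<Rightarrow> real) \<and> bounded (f ` \<Gamma>) \<and> open U}"

definition Dk :: "(real \<times> real) set \<Rightarrow> (real \<times> real) set \<Rightarrow> (real \<times> real) measure set" where
  "Dk \<Gamma> \<Gamma>0 = {G \<in> prob_measures \<Gamma>. emeasure G \<Gamma>0 = 0}"

definition borel_of :: "'a topology \<Rightarrow> 'a measure" where
  "borel_of T = sigma (topspace T) {U. openin T U}"

definition densities :: "real set \<Rightarrow> (real \<Rightarrow> real) set" where
  "densities Y = {f. f \<in> borel_measurable (restrict_space lborel Y) \<and> (\<forall>y\<in>Y. 0 \<le> f y)
      \<and> set_integrable lborel Y f \<and> (\<integral>y\<in>Y. f y \<partial>lborel) = 1}"

definition hellinger :: "real set \<Rightarrow> (real \<Rightarrow> real) \<Rightarrow> (real \<Rightarrow> real) \<Rightarrow> real" where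
  "hellinger Y f g = sqrt ((1/2) * (\<integral>y\<in>Y. (sqrt (f y) - sqrt (g y))^2 \<partial>lborel))"

definition hellinger_topology :: "real set \<Rightarrow> (real \<Rightarrow> real) topology" where
  "hellinger_topology Y = topology_generated_by
     {{g \<in> densities Y. hellinger Y f g < r} | f r. f \<in> densities Y \<and> r > 0}"

definition mixture :: "(real \<Rightarrow> real \<times> real \<Rightarrow> real) \<Rightarrow> (real \<times> real) measure \<Rightarrow> real \<Rightarrow> real" where
  "mixture k G = (\<lambda>y. \<integral>p. k y p \<partial>G)"

end

theory Submission
  imports Defs
begin


lemma meas_pair_ident:
  "(\<lambda>x::real\<times>(real\<times>real). x) \<in> measurable (restrict_space lborel Y \<Otimes>\<^sub>M restrict_space borel G) borel"
proof -
  have 1: "(\<lambda>x::real. x) \<in> measurable (restrict_space lborel Y) borel"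
    by (rule measurable_restrict_space1) (simp add: measurable_ident_sets)
  have 2: "(\<lambda>x::real\<times>real. x) \<in> measurable (restrict_space borel G) borel"
    by (rule measurable_restrict_space1) simp
  have "(\<lambda>x::real\<times>(real\<times>real). (fst x, snd x)) \<in> measurable (restrict_space lborel Y \<Otimes>\<^sub>M restrict_space borel G) (borel \<Otimes>\<^sub>M borel)"
    by (rule measurable_Pair[OF measurable_compose[OF measurable_fst 1] measurable_compose[OF measurable_snd 2]])
  then show ?thesis by (simp add: borel_prod)
qed

lemma cont_map_measurable:
  assumes "continuous_map X Y f"
  shows "f \<in> measurable (borel_of X) (borel_of Y)"
  unfolding borel_of_def
proof (rule measurable_measure_of)
  show "{U. openin Y U} \<subseteq> Pow (topspace Y)" by (auto dest: openin_subset)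
  have sp: "space (sigma (topspace X) {U. openin X U}) = topspace X"
    by (rule space_measure_of) (auto dest: openin_subset)
  show "f \<in> space (sigma (topspace X) {U. openin X U}) \<rightarrow> topspace Y"
    using assms sp by (auto simp: continuous_map_def)
  fix U assume "U \<in> {U. openin Y U}"
  then have "openin X (f -` U \<inter> topspace X)"
    using assms by (auto simp: continuous_map)
  then show "f -` U \<inter> space (sigma (topspace X) {U. openin X U}) \<in> sets (sigma (topspace X) {U. openin X U})"
    unfolding sp by (auto simp: sets_measure_of_conv dest: openin_subset)
qed

lemma Dk_facts:
  assumes "G \<in> Dk \<Gamma> \<Gamma>0"
  shows "prob_space G" "sets G = sets (restrict_space borel \<Gamma>)" "space G = \<Gamma>" "emeasure G \<Gamma>0 = 0"
proof -
  show "prob_space G" "sets G = sets (restrict_space borel \<Gamma>)" "emeasure G \<Gamma>0 = 0"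
    using assms by (auto simp: Dk_def prob_measures_def)
  then show "space G = \<Gamma>"
    by (metis sets_eq_imp_space_eq space_borel space_restrict_space inf_top.right_neutral)
qed

lemma topspace_weak: "topspace (weak_conv_topology \<Gamma>) = prob_measures \<Gamma>"
proof -
  have "prob_measures \<Gamma> \<in> {{G \<in> prob_measures \<Gamma>. (\<integral>x. f x \<partial>G) \<in> U} | f U.
        continuous_on \<Gamma> (f :: real \<times> real \<Rightarrow> real) \<and> bounded (f ` \<Gamma>) \<and> open U}"
    by (rule CollectI, rule exI[of _ "\<lambda>_. 0"], rule exI[of _ UNIV]) (auto simp: bounded_def)
  then show ?thesis unfolding weak_conv_topology_def topology_generated_by_topspace by auto
qed

lemma weak_basic_open:
  fixes f :: "real \<times> real \<Rightarrow> real"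
  assumes "continuous_on \<Gamma> f" "bounded (f ` \<Gamma>)" "open U"
  shows "openin (weak_conv_topology \<Gamma>) {G \<in> prob_measures \<Gamma>. (\<integral>x. f x \<partial>G) \<in> U}"
  unfolding weak_conv_topology_def
  apply (rule topology_generated_by_Basis)
  apply (subst mem_Collect_eq, rule exI[of _ f], rule exI[of _ U])
  using assms by simp

lemma weak_finite_open:
  fixes \<psi> :: "nat \<Rightarrow> real \<times> real \<Rightarrow> real"
  assumes "\<And>i. i < n \<Longrightarrow> continuous_on \<Gamma> (\<psi> i) \<and> bounded (\<psi> i ` \<Gamma>)"
  shows "openin (weak_conv_topology \<Gamma>) {G \<in> prob_measures \<Gamma>. \<forall>i<n. (\<integral>x. \<psi> i x \<partial>G) \<in> ball (c i) d}"
  using assms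
proof (induction n)
  case 0
  then show ?case using topspace_weak[of \<Gamma>] openin_topspace[of "weak_conv_topology \<Gamma>"] by simp
next
  case (Suc n)
  have "{G \<in> prob_measures \<Gamma>. \<forall>i<Suc n. (\<integral>x. \<psi> i x \<partial>G) \<in> ball (c i) d} =
        {G \<in> prob_measures \<Gamma>. \<forall>i<n. (\<integral>x. \<psi> i x \<partial>G) \<in> ball (c i) d} \<inter>
        {G \<in> prob_measures \<Gamma>. (\<integral>x. \<psi> n x \<partial>G) \<in> ball (c n) d}"
    by (rule set_eqI) (simp add: less_Suc_eq all_conj_distrib; blast)
  moreover have "openin (weak_conv_topology \<Gamma>) {G \<in> prob_measures \<Gamma>. (\<integral>x. \<psi> n x \<partial>G) \<in> ball (c n) d}"
    using Suc.prems by (intro weak_basic_open) auto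
  ultimately show ?case using Suc by (auto intro!: openin_Int)
qed

lemma hellinger_topspace: "topspace (hellinger_topology Y) = densities Y"
  unfolding hellinger_topology_def topology_generated_by_topspace
proof safe
  fix g assume "g \<in> densities Y"
  then show "g \<in> \<Union> {{g \<in> densities Y. hellinger Y f g < r} |f r. f \<in> densities Y \<and> 0 < r}"
    by (auto intro!: exI[of _ g] exI[of _ 1] simp: hellinger_def)
qed



locale mixk =
  fixes k :: "real \<Rightarrow> real \<times> real \<Rightarrow> real" and Y :: "real set" and \<Gamma> \<Gamma>0 :: "(real \<times> real) set"
  assumes Yb: "Y \<in> sets borel"
    and \<Gamma>b: "\<Gamma> \<in> sets borel" and \<Gamma>0b: "\<Gamma>0 \<in> sets borel" and \<Gamma>0sub: "\<Gamma>0 \<subseteq> \<Gamma>"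
    and \<Omega>open: "open (\<Gamma> - \<Gamma>0)"
    and knn: "\<And>p y. p \<in> \<Gamma> - \<Gamma>0 \<Longrightarrow> y \<in> Y \<Longrightarrow> 0 \<le> k y p"
    and kint: "\<And>p. p \<in> \<Gamma> - \<Gamma>0 \<Longrightarrow> set_integrable lborel Y (\<lambda>y. k y p)"
    and kint1: "\<And>p. p \<in> \<Gamma> - \<Gamma>0 \<Longrightarrow> (\<integral>y\<in>Y. k y p \<partial>lborel) = 1"
    and kmeas: "(\<lambda>x. k (fst x) (snd x)) \<in> borel_measurable borel"
    and kcont: "\<And>y. y \<in> Y \<Longrightarrow> continuous_on (\<Gamma> - \<Gamma>0) (k y)"
begin

abbreviation "\<Omega> \<equiv> \<Gamma> - \<Gamma>0"
abbreviation "MY \<equiv> restrict_space lborel Y"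

lemma space_MY[simp]: "space MY = Y"
  by (simp add: space_restrict_space)

lemma Y_MY: "Y \<inter> space lborel \<in> sets lborel"
  using Yb by simp

lemma sigma_finite_MY: "sigma_finite_measure MY"
  by (rule sigma_finite_measure_restrict_space) (auto simp: Yb lborel.sigma_finite_measure_axioms)

lemma k_meas_pair:
  assumes "sets G = sets (restrict_space borel \<Gamma>)"
  shows "(\<lambda>x. k (fst x) (snd x)) \<in> borel_measurable (MY \<Otimes>\<^sub>M G)"
proof -
  have "(\<lambda>x. x) \<in> measurable (MY \<Otimes>\<^sub>M G) (MY \<Otimes>\<^sub>M restrict_space borel \<Gamma>)"
    by (rule measurable_ident_sets) (rule sets_pair_measure_cong[OF refl assms])
  from measurable_compose[OF measurable_compose[OF this meas_pair_ident] kmeas] show ?thesis by simp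
qed

lemma k_meas_y: "(\<lambda>y. k y p) \<in> borel_measurable MY"
proof -
  have "(\<lambda>y. (y, p)) \<in> measurable MY borel"
    by (intro measurable_restrict_space1) simp
  from measurable_compose[OF this kmeas] show ?thesis by simp
qed

lemma k_meas_p:
  assumes "sets G = sets (restrict_space borel \<Gamma>)"
  shows "k y \<in> borel_measurable G"
proof -
  have "(\<lambda>p. (y, p)) \<in> measurable G borel"
    by (subst measurable_cong_sets[OF assms refl]) (intro measurable_restrict_space1, simp)
  from measurable_compose[OF this kmeas] show ?thesis by simp
qed

lemma k_integrable_MY:
  assumes "p \<in> \<Omega>" shows "integrable MY (\<lambda>y. k y p)"
  using kint[OF assms] unfolding set_integrable_def
  by (subst integrable_restrict_space[OF Y_MY])

lemma k_integral_MY: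
  assumes "p \<in> \<Omega>" shows "(\<integral>y. k y p \<partial>MY) = 1"
  using kint1[OF assms] unfolding set_lebesgue_integral_def
  by (subst integral_restrict_space[OF Y_MY])

lemma k_nn_integral_MY:
  assumes "p \<in> \<Omega>" shows "(\<integral>\<^sup>+y. ennreal (k y p) \<partial>MY) = 1"
proof -
  have "(\<integral>\<^sup>+y. ennreal (k y p) \<partial>MY) = ennreal (\<integral>y. k y p \<partial>MY)"
    by (rule nn_integral_eq_integral[OF k_integrable_MY[OF assms]])
       (auto intro!: AE_I2 knn[OF assms])
  then show ?thesis using k_integral_MY[OF assms] by simp
qed

context
  fixes G assumes G: "G \<in> Dk \<Gamma> \<Gamma>0"
begin

lemma G_prob: "prob_space G" and G_sets: "sets G = sets (restrict_space borel \<Gamma>)"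
  and G_space: "space G = \<Gamma>" and G_null: "emeasure G \<Gamma>0 = 0"
  using Dk_facts[OF G] by auto

interpretation G: prob_space G by (rule G_prob)

lemma pair_G: "pair_sigma_finite MY G"
  by (intro pair_sigma_finite.intro sigma_finite_MY G.sigma_finite_measure_axioms)

interpretation P: pair_sigma_finite MY G by (rule pair_G)

lemma \<Gamma>0_sets: "\<Gamma>0 \<in> sets G"
  using G_sets \<Gamma>0b \<Gamma>0sub by (auto simp: sets_restrict_space)

lemma AE_\<Omega>: "AE p in G. p \<in> \<Omega>"
proof -
  have "AE p in G. p \<notin> \<Gamma>0"
    by (rule AE_I[OF _ G_null \<Gamma>0_sets]) auto
  then show ?thesis using G_space by auto
qed

lemma F_total: "(\<integral>\<^sup>+y. (\<integral>\<^sup>+p. ennreal (k y p) \<partial>G) \<partial>MY) = 1"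
proof -
  have m: "case_prod (\<lambda>y p. ennreal (k y p)) \<in> borel_measurable (MY \<Otimes>\<^sub>M G)"
    using k_meas_pair[OF G_sets] by (simp add: split_beta')
  have "(\<integral>\<^sup>+y. (\<integral>\<^sup>+p. ennreal (k y p) \<partial>G) \<partial>MY) = (\<integral>\<^sup>+p. (\<integral>\<^sup>+y. ennreal (k y p) \<partial>MY) \<partial>G)"
    by (rule P.Fubini'[symmetric, OF m])
  also have "\<dots> = (\<integral>\<^sup>+p. 1 \<partial>G)"
    by (rule nn_integral_cong_AE) (use AE_\<Omega> in \<open>rule eventually_mono, simp add: k_nn_integral_MY\<close>)
  also have "\<dots> = 1" by (simp add: G.emeasure_space_1)
  finally show ?thesis .
qed

lemma F_meas: "(\<lambda>y. \<integral>\<^sup>+p. ennreal (k y p) \<partial>G) \<in> borel_measurable MY"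
proof -
  have m: "case_prod (\<lambda>y p. ennreal (k y p)) \<in> borel_measurable (MY \<Otimes>\<^sub>M G)"
    using k_meas_pair[OF G_sets] by (simp add: split_beta')
  show ?thesis by (rule G.borel_measurable_nn_integral[OF m])
qed

lemma F_fin: "AE y in MY. (\<integral>\<^sup>+p. ennreal (k y p) \<partial>G) \<noteq> \<infinity>"
  by (rule nn_integral_PInf_AE[OF F_meas]) (simp add: F_total)

lemma mix_eq: assumes y: "y \<in> Y" shows "mixture k G y = enn2real (\<integral>\<^sup>+p. ennreal (k y p) \<partial>G)"
proof -
  have "AE p in G. 0 \<le> k y p" using AE_\<Omega> by (rule eventually_mono) (rule knn[OF _ y])
  then show ?thesis unfolding mixture_def by (rule integral_eq_nn_integral[OF k_meas_p[OF G_sets]])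
qed

lemma mix_nonneg: "y \<in> Y \<Longrightarrow> 0 \<le> mixture k G y"
  by (simp add: mix_eq)

lemma mix_meas: "mixture k G \<in> borel_measurable MY"
  unfolding mixture_def
  by (rule G.borel_measurable_lebesgue_integral) (use k_meas_pair[OF G_sets] in \<open>simp add: split_beta'\<close>)

lemma k_integrable_G:
  assumes "(\<integral>\<^sup>+p. ennreal (k y p) \<partial>G) \<noteq> \<infinity>" "y \<in> Y"
  shows "integrable G (k y)"
proof (rule integrableI_nonneg[OF k_meas_p[OF G_sets]])
  show "AE p in G. 0 \<le> k y p" using AE_\<Omega> by (rule eventually_mono) (rule knn[OF _ assms(2)])
  show "(\<integral>\<^sup>+p. ennreal (k y p) \<partial>G) < \<infinity>" using assms(1) by (simp add: less_top)
qed

lemma mix_nn_integral: "(\<integral>\<^sup>+y. ennreal (mixture k G y) \<partial>MY) = 1"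
proof -
  have "(\<integral>\<^sup>+y. ennreal (mixture k G y) \<partial>MY) = (\<integral>\<^sup>+y. (\<integral>\<^sup>+p. ennreal (k y p) \<partial>G) \<partial>MY)"
  proof (rule nn_integral_cong_AE)
    show "AE y in MY. ennreal (mixture k G y) = (\<integral>\<^sup>+p. ennreal (k y p) \<partial>G)"
      using F_fin AE_space[of MY]
    proof eventually_elim
      case (elim y)
      then show ?case by (simp add: mix_eq less_top[symmetric] ennreal_enn2real)
    qed
  qed
  then show ?thesis using F_total by simp
qed

lemma mix_integrable: "integrable MY (mixture k G)"
  by (rule integrableI_nonneg[OF mix_meas]) (auto intro!: AE_I2 mix_nonneg simp: mix_nn_integral)

lemma mix_integral: "(\<integral>y. mixture k G y \<partial>MY) = 1"
proof -
  have "AE y in MY. 0 \<le> mixture k G y" by (rule AE_I2) (simp add: mix_nonneg)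
  from integral_eq_nn_integral[OF mix_meas this] mix_nn_integral show ?thesis by simp
qed

lemma mix_density: "mixture k G \<in> densities Y"
  unfolding densities_def
proof (intro CollectI conjI ballI)
  show "mixture k G \<in> borel_measurable MY" by (rule mix_meas)
  show "\<And>y. y \<in> Y \<Longrightarrow> 0 \<le> mixture k G y" by (rule mix_nonneg)
  show "set_integrable lborel Y (mixture k G)"
    unfolding set_integrable_def using mix_integrable by (subst (asm) integrable_restrict_space[OF Y_MY])
  show "(\<integral>y\<in>Y. mixture k G y \<partial>lborel) = 1"
    unfolding set_lebesgue_integral_def using mix_integral by (subst (asm) integral_restrict_space[OF Y_MY])
qed

end

end



context mixk begin

lemma k_L1_seq:
  assumes p: "p \<in> \<Omega>" and pn: "\<And>n. pn n \<in> \<Omega>" and lim: "pn \<longlonglongrightarrow> p"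
  shows "(\<lambda>n. \<integral>y. \<bar>k y (pn n) - k y p\<bar> \<partial>MY) \<longlonglongrightarrow> 0"
proof -
  define s where "s n y = max (k y p - k y (pn n)) 0" for n y
  have ks: "(\<lambda>n. k y (pn n)) \<longlonglongrightarrow> k y p" if y: "y \<in> Y" for y
    by (rule continuous_on_tendsto_compose[OF kcont[OF y] lim p]) (intro always_eventually allI pn)
  have sm: "s n \<in> borel_measurable MY" for n
    unfolding s_def by (intro borel_measurable_max borel_measurable_diff k_meas_y) simp
  have sb: "norm (s n y) \<le> k y p" if "y \<in> Y" for n y
    using knn[OF p that] knn[OF pn that] by (auto simp: s_def)
  have si: "integrable MY (s n)" for n
  proof (rule Bochner_Integration.integrable_bound[OF k_integrable_MY[OF p] sm])
    show "AE y in MY. norm (s n y) \<le> norm (k y p)"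
    proof (rule AE_I2)
      fix y assume "y \<in> space MY"
      then have y: "y \<in> Y" by simp
      show "norm (s n y) \<le> norm (k y p)" using sb[OF y, of n] knn[OF p y] by simp
    qed
  qed
  have "(\<lambda>n. \<integral>y. s n y \<partial>MY) \<longlonglongrightarrow> (\<integral>y. 0 \<partial>MY)"
  proof (rule integral_dominated_convergence[where w="\<lambda>y. k y p"])
    show "(\<lambda>y. 0::real) \<in> borel_measurable MY" by simp
    show "s n \<in> borel_measurable MY" for n by (rule sm)
    show "integrable MY (\<lambda>y. k y p)" by (rule k_integrable_MY[OF p])
    show "AE y in MY. (\<lambda>n. s n y) \<longlonglongrightarrow> 0"
    proof (rule AE_I2)
      fix y assume "y \<in> space MY"
      then have y: "y \<in> Y" by simp
      have "(\<lambda>n. max (k y p - k y (pn n)) 0) \<longlonglongrightarrow> max (k y p - k y p) 0"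
        by (intro tendsto_max tendsto_diff tendsto_const ks[OF y])
      then show "(\<lambda>n. s n y) \<longlonglongrightarrow> 0" by (simp add: s_def)
    qed
    show "AE y in MY. norm (s n y) \<le> k y p" for n using sb by (intro AE_I2) simp
  qed
  then have s0: "(\<lambda>n. \<integral>y. s n y \<partial>MY) \<longlonglongrightarrow> 0" by simp
  have eq: "(\<integral>y. \<bar>k y (pn n) - k y p\<bar> \<partial>MY) = 2 * (\<integral>y. s n y \<partial>MY)" for n
  proof -
    have "(\<integral>y. \<bar>k y (pn n) - k y p\<bar> \<partial>MY) = (\<integral>y. (k y (pn n) - k y p) + 2 * s n y \<partial>MY)"
      by (rule Bochner_Integration.integral_cong) (auto simp: s_def max_def abs_if)
    also have "\<dots> = (\<integral>y. k y (pn n) - k y p \<partial>MY) + (\<integral>y. 2 * s n y \<partial>MY)"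
      by (intro Bochner_Integration.integral_add Bochner_Integration.integrable_diff
            k_integrable_MY pn p integrable_mult_right si)
    also have "(\<integral>y. k y (pn n) - k y p \<partial>MY) = 0"
      by (subst Bochner_Integration.integral_diff) (auto intro!: k_integrable_MY pn p simp: k_integral_MY[OF pn] k_integral_MY[OF p])
    finally show ?thesis by simp
  qed
  show ?thesis unfolding eq using tendsto_mult_right_zero[OF s0, of 2] by (simp add: mult.commute)
qed

lemma k_L1_cont:
  assumes p: "p \<in> \<Omega>" and e: "e > 0"
  shows "\<exists>\<eta>>0. \<forall>p'. dist p' p \<le> \<eta> \<longrightarrow> p' \<in> \<Omega> \<and> (\<integral>y. \<bar>k y p' - k y p\<bar> \<partial>MY) \<le> e"
proof (rule ccontr)
  assume H: "\<not> ?thesis"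
  obtain \<eta>0 where \<eta>0: "\<eta>0 > 0" "cball p \<eta>0 \<subseteq> \<Omega>"
    using \<Omega>open p open_contains_cball by blast
  have "\<forall>n. \<exists>p'. dist p' p \<le> min \<eta>0 (1 / (Suc n)) \<and> \<not> (p' \<in> \<Omega> \<and> (\<integral>y. \<bar>k y p' - k y p\<bar> \<partial>MY) \<le> e)"
  proof
    fix n :: nat
    have "min \<eta>0 (1 / (Suc n)) > 0" using \<eta>0 by simp
    then show "\<exists>p'. dist p' p \<le> min \<eta>0 (1 / (Suc n)) \<and> \<not> (p' \<in> \<Omega> \<and> (\<integral>y. \<bar>k y p' - k y p\<bar> \<partial>MY) \<le> e)"
      using H by blast
  qed
  then obtain pn where pn: "\<And>n. dist (pn n) p \<le> min \<eta>0 (1 / (Suc n))"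
    "\<And>n. \<not> (pn n \<in> \<Omega> \<and> (\<integral>y. \<bar>k y (pn n) - k y p\<bar> \<partial>MY) \<le> e)"
    by metis
  have inO: "pn n \<in> \<Omega>" for n
  proof -
    have "pn n \<in> cball p \<eta>0" using pn(1)[of n] by (simp add: dist_commute)
    then show ?thesis using \<eta>0(2) by blast
  qed
  have big: "(\<integral>y. \<bar>k y (pn n) - k y p\<bar> \<partial>MY) > e" for n
    using pn(2)[of n] inO[of n] by simp
  have lim: "pn \<longlonglongrightarrow> p"
  proof (rule LIMSEQ_I)
    fix r :: real assume r: "r > 0"
    obtain N :: nat where N: "1 / r < N" using reals_Archimedean2 by blast
    show "\<exists>no. \<forall>n\<ge>no. norm (pn n - p) < r"
    proof (intro exI allI impI)
      fix n assume "n \<ge> N"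
      then have "real N \<le> real n" by simp
      then have "1 / r < real (Suc n)" using N by simp
      then have "1 < real (Suc n) * r" using r by (simp add: pos_divide_less_eq)
      then have "1 / (Suc n) < r" by (simp add: pos_divide_less_eq mult.commute)
      then show "norm (pn n - p) < r" using pn(1)[of n] by (simp add: dist_norm)
    qed
  qed
  from k_L1_seq[OF p inO lim] e have "eventually (\<lambda>n. (\<integral>y. \<bar>k y (pn n) - k y p\<bar> \<partial>MY) < e) sequentially"
    by (intro order_tendstoD) auto
  then obtain n where "(\<integral>y. \<bar>k y (pn n) - k y p\<bar> \<partial>MY) < e" by (auto simp: eventually_sequentially)
  with big[of n] show False by simp
qed

end



lemma aux_ineq:
  fixes a :: real and w b :: "nat \<Rightarrow> real"
  assumes a: "0 \<le> a" and w: "\<And>i. 0 \<le> w i" and s: "(\<Sum>i<n. w i) \<le> 1"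
  shows "\<bar>a - (\<Sum>i<n. w i * b i)\<bar> \<le> (1 - (\<Sum>i<n. w i)) * a + (\<Sum>i<n. w i * \<bar>a - b i\<bar>)"
proof -
  have eq: "a - (\<Sum>i<n. w i * b i) = (1 - (\<Sum>i<n. w i)) * a + (\<Sum>i<n. w i * (a - b i))"
    by (simp add: algebra_simps sum_distrib_right sum_distrib_left sum_subtractf)
  have "\<bar>(\<Sum>i<n. w i * (a - b i))\<bar> \<le> (\<Sum>i<n. \<bar>w i * (a - b i)\<bar>)" by (rule sum_abs)
  also have "\<dots> = (\<Sum>i<n. w i * \<bar>a - b i\<bar>)" by (simp add: abs_mult w)
  finally have 2: "\<bar>(\<Sum>i<n. w i * (a - b i))\<bar> \<le> (\<Sum>i<n. w i * \<bar>a - b i\<bar>)" .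
  have 1: "\<bar>(1 - (\<Sum>i<n. w i)) * a\<bar> = (1 - (\<Sum>i<n. w i)) * a" using a s by simp
  show ?thesis unfolding eq using 1 2 abs_triangle_ineq[of "(1 - (\<Sum>i<n. w i)) * a" "(\<Sum>i<n. w i * (a - b i))"]
    by linarith
qed

context mixk begin

lemma L1_tri:
  assumes "f \<in> borel_measurable MY" "g \<in> borel_measurable MY" "h \<in> borel_measurable MY"
  shows "(\<integral>\<^sup>+y. ennreal \<bar>f y - h y\<bar> \<partial>MY) \<le> (\<integral>\<^sup>+y. ennreal \<bar>f y - g y\<bar> \<partial>MY) + (\<integral>\<^sup>+y. ennreal \<bar>g y - h y\<bar> \<partial>MY)"
proof -
  have "(\<integral>\<^sup>+y. ennreal \<bar>f y - h y\<bar> \<partial>MY) \<le> (\<integral>\<^sup>+y. ennreal \<bar>f y - g y\<bar> + ennreal \<bar>g y - h y\<bar> \<partial>MY)"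
  proof (rule nn_integral_mono)
    fix y
    have "ennreal \<bar>f y - h y\<bar> \<le> ennreal (\<bar>f y - g y\<bar> + \<bar>g y - h y\<bar>)"
      by (rule ennreal_leI) linarith
    also have "\<dots> = ennreal \<bar>f y - g y\<bar> + ennreal \<bar>g y - h y\<bar>"
      by (rule ennreal_plus) auto
    finally show "ennreal \<bar>f y - h y\<bar> \<le> ennreal \<bar>f y - g y\<bar> + ennreal \<bar>g y - h y\<bar>" .
  qed
  also have "\<dots> = (\<integral>\<^sup>+y. ennreal \<bar>f y - g y\<bar> \<partial>MY) + (\<integral>\<^sup>+y. ennreal \<bar>g y - h y\<bar> \<partial>MY)"
    by (rule nn_integral_add) (use assms in measurable)
  finally show ?thesis .
qed

lemma L1_sum:
  assumes q: "\<And>i. i < n \<Longrightarrow> q i \<in> \<Omega>"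
  shows "(\<integral>\<^sup>+y. ennreal \<bar>(\<Sum>i<n. a i * k y (q i)) - (\<Sum>i<n. b i * k y (q i))\<bar> \<partial>MY) \<le> ennreal (\<Sum>i<n. \<bar>a i - b i\<bar>)"
proof -
  have "(\<integral>\<^sup>+y. ennreal \<bar>(\<Sum>i<n. a i * k y (q i)) - (\<Sum>i<n. b i * k y (q i))\<bar> \<partial>MY)
      \<le> (\<integral>\<^sup>+y. ennreal (\<Sum>i<n. \<bar>a i - b i\<bar> * k y (q i)) \<partial>MY)"
  proof (rule nn_integral_mono)
    fix y assume "y \<in> space MY"
    then have y: "y \<in> Y" by simp
    have "\<bar>(\<Sum>i<n. a i * k y (q i)) - (\<Sum>i<n. b i * k y (q i))\<bar> = \<bar>\<Sum>i<n. (a i - b i) * k y (q i)\<bar>"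
      by (simp add: sum_subtractf left_diff_distrib)
    also have "\<dots> \<le> (\<Sum>i<n. \<bar>(a i - b i) * k y (q i)\<bar>)" by (rule sum_abs)
    also have "\<dots> = (\<Sum>i<n. \<bar>a i - b i\<bar> * k y (q i))"
      by (rule sum.cong) (auto simp: abs_mult knn[OF q y])
    finally show "ennreal \<bar>(\<Sum>i<n. a i * k y (q i)) - (\<Sum>i<n. b i * k y (q i))\<bar> \<le> ennreal (\<Sum>i<n. \<bar>a i - b i\<bar> * k y (q i))"
      by (rule ennreal_leI)
  qed
  also have "\<dots> = ennreal (\<integral>y. (\<Sum>i<n. \<bar>a i - b i\<bar> * k y (q i)) \<partial>MY)"
  proof (rule nn_integral_eq_integral)
    show "integrable MY (\<lambda>y. \<Sum>i<n. \<bar>a i - b i\<bar> * k y (q i))"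
      by (intro Bochner_Integration.integrable_sum integrable_mult_right k_integrable_MY q) simp
    show "AE y in MY. 0 \<le> (\<Sum>i<n. \<bar>a i - b i\<bar> * k y (q i))"
      by (rule AE_I2) (auto intro!: sum_nonneg mult_nonneg_nonneg knn q)
  qed
  also have "(\<integral>y. (\<Sum>i<n. \<bar>a i - b i\<bar> * k y (q i)) \<partial>MY) = (\<Sum>i<n. \<bar>a i - b i\<bar>)"
    by (subst Bochner_Integration.integral_sum)
       (auto intro!: integrable_mult_right k_integrable_MY q sum.cong simp: k_integral_MY[OF q])
  finally show ?thesis .
qed

context
  fixes G assumes G: "G \<in> Dk \<Gamma> \<Gamma>0"
begin

interpretation G: prob_space G by (rule G_prob[OF G])
interpretation P: pair_sigma_finite MY G by (rule pair_G[OF G])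

lemma G_meas: "f \<in> borel_measurable borel \<Longrightarrow> f \<in> borel_measurable G"
  by (subst measurable_cong_sets[OF G_sets[OF G] refl]) (rule measurable_restrict_space1)

lemma est:
  fixes \<psi> :: "nat \<Rightarrow> real \<times> real \<Rightarrow> real" and q :: "nat \<Rightarrow> real \<times> real" and e :: real
  assumes \<psi>m: "\<And>i. \<psi> i \<in> borel_measurable borel"
    and \<psi>nn: "\<And>i p. 0 \<le> \<psi> i p"
    and \<psi>sum: "\<And>p. (\<Sum>i<n. \<psi> i p) \<le> 1"
    and q\<Omega>: "\<And>i. i < n \<Longrightarrow> q i \<in> \<Omega>"
    and good: "\<And>i p. i < n \<Longrightarrow> p \<in> \<Omega> \<Longrightarrow> \<psi> i p > 0 \<Longrightarrow> (\<integral>y. \<bar>k y p - k y (q i)\<bar> \<partial>MY) \<le> e"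
    and e: "e \<ge> 0"
  shows "(\<integral>\<^sup>+y. ennreal \<bar>mixture k G y - (\<Sum>i<n. (\<integral>p. \<psi> i p \<partial>G) * k y (q i))\<bar> \<partial>MY)
           \<le> ennreal (1 - (\<integral>p. (\<Sum>i<n. \<psi> i p) \<partial>G) + e)"
proof -
  define S where "S p = (\<Sum>i<n. \<psi> i p)" for p
  define E where "E y p = (1 - S p) * k y p + (\<Sum>i<n. \<psi> i p * \<bar>k y p - k y (q i)\<bar>)" for y p
  have \<psi>le1: "\<psi> i p \<le> 1" if "i < n" for i p
  proof -
    have "\<psi> i p \<le> (\<Sum>i<n. \<psi> i p)"
      by (rule member_le_sum) (use that \<psi>nn in auto)
    then show ?thesis using \<psi>sum[of p] by simp
  qed
  have \<psi>G: "\<psi> i \<in> borel_measurable G" for i by (rule G_meas[OF \<psi>m])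
  have \<psi>int: "integrable G (\<psi> i)" if "i < n" for i
    by (rule G.integrable_const_bound[where B=1]) (auto intro!: AE_I2 simp: \<psi>nn \<psi>le1 that \<psi>G)
  have Sm: "S \<in> borel_measurable G" unfolding S_def using \<psi>G by measurable
  have Sint: "integrable G S" unfolding S_def by (intro Bochner_Integration.integrable_sum \<psi>int) simp
  have S01: "0 \<le> S p" "S p \<le> 1" for p unfolding S_def using \<psi>sum[of p] by (auto intro!: sum_nonneg \<psi>nn)
  have step1: "AE y in MY. ennreal \<bar>mixture k G y - (\<Sum>i<n. (\<integral>p. \<psi> i p \<partial>G) * k y (q i))\<bar>
                 \<le> (\<integral>\<^sup>+p. ennreal (E y p) \<partial>G)"
    using F_fin[OF G] AE_space[of MY]
  proof eventually_elim
    case (elim y)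
    then have y: "y \<in> Y" and fin: "(\<integral>\<^sup>+p. ennreal (k y p) \<partial>G) \<noteq> \<infinity>" by auto
    have ky: "integrable G (k y)" by (rule k_integrable_G[OF G fin y])
    have sint: "integrable G (\<lambda>p. \<Sum>i<n. \<psi> i p * k y (q i))"
      by (intro Bochner_Integration.integrable_sum integrable_mult_left \<psi>int) simp
    have "mixture k G y - (\<Sum>i<n. (\<integral>p. \<psi> i p \<partial>G) * k y (q i))
        = (\<integral>p. k y p - (\<Sum>i<n. \<psi> i p * k y (q i)) \<partial>G)"
    proof -
      have "(\<integral>p. (\<Sum>i<n. \<psi> i p * k y (q i)) \<partial>G) = (\<Sum>i<n. (\<integral>p. \<psi> i p \<partial>G) * k y (q i))"
        by (subst Bochner_Integration.integral_sum) (auto intro!: integrable_mult_left \<psi>int)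
      then show ?thesis
        unfolding mixture_def by (subst Bochner_Integration.integral_diff[OF ky sint]) simp
    qed
    then have "ennreal \<bar>mixture k G y - (\<Sum>i<n. (\<integral>p. \<psi> i p \<partial>G) * k y (q i))\<bar>
        = ennreal (norm (\<integral>p. k y p - (\<Sum>i<n. \<psi> i p * k y (q i)) \<partial>G))" by simp
    also have "\<dots> \<le> (\<integral>\<^sup>+p. norm (k y p - (\<Sum>i<n. \<psi> i p * k y (q i))) \<partial>G)"
      by (rule integral_norm_bound_ennreal) (intro Bochner_Integration.integrable_diff ky sint)
    also have "\<dots> \<le> (\<integral>\<^sup>+p. ennreal (E y p) \<partial>G)"
    proof (rule nn_integral_mono_AE)
      show "AE p in G. ennreal (norm (k y p - (\<Sum>i<n. \<psi> i p * k y (q i)))) \<le> ennreal (E y p)"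
        using AE_\<Omega>[OF G]
      proof eventually_elim
        case (elim p)
        show ?case unfolding E_def S_def real_norm_def
          by (rule ennreal_leI, rule aux_ineq[OF knn[OF elim y] \<psi>nn \<psi>sum])
      qed
    qed
    finally show ?case .
  qed
  have km[measurable]: "(\<lambda>x. k (fst x) (snd x)) \<in> borel_measurable (MY \<Otimes>\<^sub>M G)"
    by (rule k_meas_pair[OF G_sets[OF G]])
  have kq[measurable]: "(\<lambda>x. k (fst x) (q i)) \<in> borel_measurable (MY \<Otimes>\<^sub>M G)" for i
    by (rule measurable_compose[OF measurable_fst k_meas_y])
  have \<psi>s[measurable]: "(\<lambda>x. \<psi> i (snd x)) \<in> borel_measurable (MY \<Otimes>\<^sub>M G)" for i
    by (rule measurable_compose[OF measurable_snd \<psi>G])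
  have Em: "(\<lambda>x. ennreal (E (fst x) (snd x))) \<in> borel_measurable (MY \<Otimes>\<^sub>M G)"
    unfolding E_def S_def by measurable
  have step2: "(\<integral>\<^sup>+y. (\<integral>\<^sup>+p. ennreal (E y p) \<partial>G) \<partial>MY) = (\<integral>\<^sup>+p. (\<integral>\<^sup>+y. ennreal (E y p) \<partial>MY) \<partial>G)"
    by (rule P.Fubini'[symmetric]) (use Em in \<open>simp add: split_beta'\<close>)
  have step3: "(\<integral>\<^sup>+y. ennreal (E y p) \<partial>MY) \<le> ennreal (1 - S p + e)" if p: "p \<in> \<Omega>" for p
  proof -
    have dint: "integrable MY (\<lambda>y. \<bar>k y p - k y (q i)\<bar>)" if "i < n" for i
      by (intro integrable_abs Bochner_Integration.integrable_diff k_integrable_MY p q\<Omega> that)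
    have Eint: "integrable MY (\<lambda>y. E y p)"
      unfolding E_def
      by (intro Bochner_Integration.integrable_add integrable_mult_right k_integrable_MY p
            Bochner_Integration.integrable_sum dint) simp
    have Enn: "0 \<le> E y p" if "y \<in> Y" for y
      unfolding E_def using S01[of p] knn[OF p that]
      by (intro add_nonneg_nonneg mult_nonneg_nonneg sum_nonneg) (auto simp: \<psi>nn)
    have Eeq: "(\<integral>y. E y p \<partial>MY) = (1 - S p) + (\<Sum>i<n. \<psi> i p * (\<integral>y. \<bar>k y p - k y (q i)\<bar> \<partial>MY))"
    proof -
      have "(\<integral>y. (\<Sum>i<n. \<psi> i p * \<bar>k y p - k y (q i)\<bar>) \<partial>MY) = (\<Sum>i<n. \<psi> i p * (\<integral>y. \<bar>k y p - k y (q i)\<bar> \<partial>MY))"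
        by (subst Bochner_Integration.integral_sum) (auto intro!: integrable_mult_right dint)
      then show ?thesis
        unfolding E_def
        by (subst Bochner_Integration.integral_add)
           (auto intro!: integrable_mult_right k_integrable_MY p Bochner_Integration.integrable_sum dint
               simp: k_integral_MY[OF p])
    qed
    have Sle: "(\<Sum>i<n. \<psi> i p * (\<integral>y. \<bar>k y p - k y (q i)\<bar> \<partial>MY)) \<le> (\<Sum>i<n. \<psi> i p * e)"
    proof (rule sum_mono)
      fix i assume i: "i \<in> {..<n}"
      show "\<psi> i p * (\<integral>y. \<bar>k y p - k y (q i)\<bar> \<partial>MY) \<le> \<psi> i p * e"
      proof (cases "\<psi> i p > 0")
        case True
        then show ?thesis using good[of i p] i p by (intro mult_left_mono) auto
      next
        case False
        then have "\<psi> i p = 0" using \<psi>nn[of i p] by simp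
        then show ?thesis by simp
      qed
    qed
    have Se1: "(\<Sum>i<n. \<psi> i p * e) = S p * e" unfolding S_def by (simp add: sum_distrib_right)
    have Se2: "S p * e \<le> e" using S01[of p] e by (simp add: mult_left_le_one_le)
    have R: "(\<integral>y. E y p \<partial>MY) \<le> 1 - S p + e" using Eeq Sle Se1 Se2 by linarith
    have "(\<integral>\<^sup>+y. ennreal (E y p) \<partial>MY) = ennreal (\<integral>y. E y p \<partial>MY)"
      by (rule nn_integral_eq_integral[OF Eint]) (auto intro!: AE_I2 Enn)
    then show ?thesis using R by (simp add: ennreal_leI)
  qed
  have step4: "(\<integral>\<^sup>+p. ennreal (1 - S p + e) \<partial>G) = ennreal (1 - (\<integral>p. S p \<partial>G) + e)"
  proof -
    have i1: "integrable G (\<lambda>p. 1 - S p + e)"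
      by (intro Bochner_Integration.integrable_add Bochner_Integration.integrable_diff Sint) auto
    have "(\<integral>\<^sup>+p. ennreal (1 - S p + e) \<partial>G) = ennreal (\<integral>p. 1 - S p + e \<partial>G)"
      by (rule nn_integral_eq_integral[OF i1]) (auto intro!: AE_I2 simp: S01 e add_nonneg_nonneg)
    also have "(\<integral>p. 1 - S p + e \<partial>G) = 1 - (\<integral>p. S p \<partial>G) + e"
      using Sint by (simp add: Bochner_Integration.integral_add Bochner_Integration.integral_diff G.prob_space)
    finally show ?thesis .
  qed
  have "(\<integral>\<^sup>+y. ennreal \<bar>mixture k G y - (\<Sum>i<n. (\<integral>p. \<psi> i p \<partial>G) * k y (q i))\<bar> \<partial>MY)
      \<le> (\<integral>\<^sup>+y. (\<integral>\<^sup>+p. ennreal (E y p) \<partial>G) \<partial>MY)"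
    by (rule nn_integral_mono_AE[OF step1])
  also have "\<dots> = (\<integral>\<^sup>+p. (\<integral>\<^sup>+y. ennreal (E y p) \<partial>MY) \<partial>G)" by (rule step2)
  also have "\<dots> \<le> (\<integral>\<^sup>+p. ennreal (1 - S p + e) \<partial>G)"
  proof (rule nn_integral_mono_AE)
    show "AE p in G. (\<integral>\<^sup>+y. ennreal (E y p) \<partial>MY) \<le> ennreal (1 - S p + e)"
      using AE_\<Omega>[OF G] by (rule eventually_mono) (rule step3)
  qed
  also have "\<dots> = ennreal (1 - (\<integral>p. S p \<partial>G) + e)" by (rule step4)
  finally show ?thesis unfolding S_def .
qed

end

end



primrec Smax :: "(nat \<Rightarrow> 'a \<Rightarrow> real) \<Rightarrow> nat \<Rightarrow> 'a \<Rightarrow> real" where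
  "Smax b 0 p = 0"
| "Smax b (Suc j) p = max (Smax b j p) (b j p)"

lemma Smax_bounds:
  assumes "\<And>j p. 0 \<le> b j p" "\<And>j p. b j p \<le> 1"
  shows "0 \<le> Smax b m p \<and> Smax b m p \<le> 1"
  by (induction m) (use assms in auto)

lemma Smax_mono: "m \<le> m' \<Longrightarrow> Smax b m p \<le> Smax b m' p"
proof (induction m' arbitrary: m)
  case 0 then show ?case by simp
next
  case (Suc m')
  then show ?case by (cases "m = Suc m'") (auto simp: le_Suc_eq intro: max.coboundedI1)
qed

lemma Smax_ge: "j < m \<Longrightarrow> b j p \<le> Smax b m p"
proof -
  assume "j < m"
  then have "Smax b (Suc j) p \<le> Smax b m p" by (intro Smax_mono) simp
  then show ?thesis by simp
qed

lemma Smax_cont: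
  assumes "\<And>j. continuous_on UNIV (b j)"
  shows "continuous_on UNIV (Smax b m)"
proof (induction m)
  case 0 then show ?case by (simp add: continuous_on_const)
next
  case (Suc m)
  have "Smax b (Suc m) = (\<lambda>p. max (Smax b m p) (b m p))" by (rule ext) simp
  then show ?case using Suc assms[of m] by (simp add: continuous_on_max)
qed

lemma Smax_telescope: "(\<Sum>i<n. Smax b (Suc i) p - Smax b i p) = Smax b n p"
  by (subst sum_lessThan_telescope[of "\<lambda>i. Smax b i p"]) simp

lemma Smax_pos_diff:
  assumes "\<And>j p. 0 \<le> b j p" "\<And>j p. b j p \<le> 1" "Smax b (Suc i) p - Smax b i p > 0"
  shows "b i p > 0"
proof (rule ccontr)
  assume "\<not> b i p > 0"
  then have "b i p \<le> Smax b i p" using Smax_bounds[of b i p, OF assms(1,2)] by simp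
  then show False using assms(3) by (simp add: max_def)
qed

definition bump :: "(real \<times> real) \<times> real \<Rightarrow> real \<times> real \<Rightarrow> real" where
  "bump x p = max 0 (min 1 (2 - dist p (fst x) / snd x))"

lemma bump_cont: "continuous_on UNIV (bump x)"
proof -
  have "bump x = (\<lambda>p. max 0 (min 1 (2 - dist p (fst x) * inverse (snd x))))"
    unfolding bump_def by (simp add: divide_inverse)
  then show ?thesis by (simp add: continuous_intros)
qed

lemma bump_bounds: "0 \<le> bump x p" "bump x p \<le> 1"
  unfolding bump_def by auto

lemma bump_one: "snd x > 0 \<Longrightarrow> dist p (fst x) < snd x \<Longrightarrow> bump x p = 1"
  unfolding bump_def by (simp add: divide_less_eq_1)

lemma bump_pos: "snd x > 0 \<Longrightarrow> bump x p > 0 \<Longrightarrow> dist p (fst x) \<le> 2 * snd x"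
  unfolding bump_def by (auto simp: max_def min_def split: if_splits simp: field_simps)

context mixk begin

abbreviation "Dr p q \<equiv> (\<integral>y. \<bar>k y p - k y q\<bar> \<partial>MY)"

lemma Dr_tri:
  assumes "p1 \<in> \<Omega>" "p2 \<in> \<Omega>" "p3 \<in> \<Omega>"
  shows "Dr p1 p3 \<le> Dr p1 p2 + Dr p2 p3"
proof -
  have i: "integrable MY (\<lambda>y. \<bar>k y a - k y b\<bar>)" if "a \<in> \<Omega>" "b \<in> \<Omega>" for a b
    by (intro integrable_abs Bochner_Integration.integrable_diff k_integrable_MY that)
  have "Dr p1 p3 \<le> (\<integral>y. \<bar>k y p1 - k y p2\<bar> + \<bar>k y p2 - k y p3\<bar> \<partial>MY)"
    by (rule integral_mono) (auto intro!: i Bochner_Integration.integrable_add assms)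
  also have "\<dots> = Dr p1 p2 + Dr p2 p3"
    by (rule Bochner_Integration.integral_add) (auto intro!: i assms)
  finally show ?thesis .
qed

lemma Dr_sym: "Dr p q = Dr q p"
  by (simp add: abs_minus_commute)

lemma exists_good_ball:
  assumes p: "p \<in> \<Omega>" and e: "e > 0"
  shows "\<exists>a b c. dist p (of_rat a, of_rat b) < of_rat c \<and> of_rat c > (0::real) \<and>
           cball (of_rat a, of_rat b) (2 * of_rat c) \<subseteq> \<Omega> \<and>
           (\<forall>p'\<in>cball (of_rat a, of_rat b) (2 * of_rat c). Dr p' (of_rat a, of_rat b) \<le> e)"
proof -
  obtain \<eta> where \<eta>: "\<eta> > 0" "\<And>p'. dist p' p \<le> \<eta> \<Longrightarrow> p' \<in> \<Omega> \<and> Dr p' p \<le> e / 2"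
    using k_L1_cont[OF p, of "e/2"] e by auto
  obtain c' where c': "c' \<in> \<rat>" "0 < c'" "c' < \<eta> / 4" using Rats_dense_in_real[of 0 "\<eta>/4"] \<eta> by auto
  obtain c where c: "c' = of_rat c" using c'(1) Rats_cases by blast
  obtain a' where a': "a' \<in> \<rat>" "fst p - c'/2 < a'" "a' < fst p" using Rats_dense_in_real[of "fst p - c'/2" "fst p"] c' by auto
  obtain b' where b': "b' \<in> \<rat>" "snd p - c'/2 < b'" "b' < snd p" using Rats_dense_in_real[of "snd p - c'/2" "snd p"] c' by auto
  obtain a where a: "a' = of_rat a" using a'(1) Rats_cases by blast
  obtain b where b: "b' = of_rat b" using b'(1) Rats_cases by blast
  define q where "q = (a', b')"
  have "dist p q = sqrt ((dist (fst p) a')\<^sup>2 + (dist (snd p) b')\<^sup>2)"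
    unfolding q_def by (metis dist_Pair_Pair prod.collapse)
  also have "\<dots> \<le> \<bar>dist (fst p) a'\<bar> + \<bar>dist (snd p) b'\<bar>" by (rule sqrt_sum_squares_le_sum_abs)
  also have "\<dots> < c'" using a' b' by (simp add: dist_real_def)
  finally have dpq: "dist p q < c'" .
  have qin: "dist q p \<le> \<eta>" using dpq c' by (simp add: dist_commute)
  have cb: "dist p' p \<le> \<eta>" if "p' \<in> cball q (2 * c')" for p' :: "real \<times> real"
  proof -
    have "dist p' p \<le> dist p' q + dist q p" by (rule dist_triangle)
    then show ?thesis using that dpq c' by (simp add: dist_commute)
  qed
  show ?thesis
  proof (intro exI conjI ballI)
    show "dist p (of_rat a, of_rat b) < of_rat c" using dpq by (simp add: q_def a b c)
    show "of_rat c > (0::real)" using c' c by simp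
    show "cball (of_rat a, of_rat b) (2 * of_rat c) \<subseteq> \<Omega>"
      using cb \<eta>(2) by (auto simp: q_def a b c)
    fix p' :: "real \<times> real" assume "p' \<in> cball (of_rat a, of_rat b) (2 * of_rat c)"
    then have p': "p' \<in> cball q (2 * c')" by (simp add: q_def a b c)
    have "Dr p' q \<le> Dr p' p + Dr p q"
      by (rule Dr_tri) (use \<eta>(2)[OF cb[OF p']] \<eta>(2)[OF qin] p in auto)
    also have "\<dots> \<le> e/2 + e/2"
      using \<eta>(2)[OF cb[OF p']] \<eta>(2)[OF qin] Dr_sym[of p q] by (intro add_mono) auto
    finally show "Dr p' (of_rat a, of_rat b) \<le> e" by (simp add: q_def a b)
  qed
qed

lemma construct:
  assumes G0: "G0 \<in> Dk \<Gamma> \<Gamma>0" and e: "e > 0"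
  shows "\<exists>(n::nat) (\<psi>::nat \<Rightarrow> real \<times> real \<Rightarrow> real) q. (\<forall>i. continuous_on UNIV (\<psi> i)) \<and> (\<forall>i p. 0 \<le> \<psi> i p \<and> \<psi> i p \<le> 1)
     \<and> (\<forall>p. (\<Sum>i<n. \<psi> i p) \<le> 1) \<and> (\<forall>i<n. q i \<in> \<Omega>)
     \<and> (\<forall>i<n. \<forall>p\<in>\<Omega>. \<psi> i p > 0 \<longrightarrow> Dr p (q i) \<le> e)
     \<and> (\<integral>p. (\<Sum>i<n. \<psi> i p) \<partial>G0) \<ge> 1 - e"
proof -
  interpret G0: prob_space G0 by (rule G_prob[OF G0])
  define good where "good x \<longleftrightarrow> snd x > 0 \<and> cball (fst x) (2 * snd x) \<subseteq> \<Omega> \<and>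
      (\<forall>p'\<in>cball (fst x) (2 * snd x). Dr p' (fst x) \<le> e)" for x :: "(real \<times> real) \<times> real"
  define I where "I = {x. good x} \<inter> (\<lambda>(a, b, c). ((of_rat a, of_rat b), of_rat c)) ` UNIV"
  have cI: "countable I" unfolding I_def by (intro countable_Int2 countable_image) simp
  have cover: "\<exists>x\<in>I. dist p (fst x) < snd x" if p: "p \<in> \<Omega>" for p
  proof -
    obtain a b c where abc: "dist p (of_rat a, of_rat b) < of_rat c" "of_rat c > (0::real)"
           "cball (of_rat a, of_rat b) (2 * of_rat c) \<subseteq> \<Omega>"
           "\<forall>p'\<in>cball (of_rat a, of_rat b) (2 * of_rat c). Dr p' (of_rat a, of_rat b) \<le> e"
      using exists_good_ball[OF p e] by blast
    show ?thesis
    proof (rule bexI[of _ "((of_rat a, of_rat b), of_rat c)"])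
      show "dist p (fst ((of_rat a, of_rat b), of_rat c)) < snd ((of_rat a, of_rat b), of_rat c)"
        using abc(1) by simp
      show "((of_rat a, of_rat b), of_rat c) \<in> I"
        unfolding I_def good_def using abc(2-4) by (auto intro!: image_eqI[of _ _ "(a, b, c)"])
    qed
  qed
  have \<Omega>ne: "\<Omega> \<noteq> {}"
  proof
    assume E: "\<Omega> = {}"
    have "AE p in G0. False" using AE_\<Omega>[OF G0] by (rule eventually_mono) (use E in blast)
    then show False using G0.AE_False by simp
  qed
  then obtain p0 where "p0 \<in> \<Omega>" by blast
  then have Ine: "I \<noteq> {}" using cover by blast
  define idx where "idx = from_nat_into I"
  have idxI: "idx j \<in> I" for j unfolding idx_def by (rule from_nat_into[OF Ine])
  have idxgood: "good (idx j)" for j using idxI[of j] unfolding I_def by auto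
  define b where "b j = bump (idx j)" for j
  have b01: "0 \<le> b j p" "b j p \<le> 1" for j p unfolding b_def by (simp_all add: bump_bounds)
  define \<psi> where "\<psi> i p = Smax b (Suc i) p - Smax b i p" for i p
  define q where "q i = fst (idx i)" for i
  have \<psi>sum: "(\<Sum>i<n. \<psi> i p) = Smax b n p" for n p unfolding \<psi>_def by (rule Smax_telescope)
  have lim: "(\<lambda>n. Smax b n p) \<longlonglongrightarrow> 1" if p: "p \<in> \<Omega>" for p
  proof -
    obtain x where x: "x \<in> I" "dist p (fst x) < snd x" using cover[OF p] by blast
    obtain j where j: "idx j = x" using from_nat_into_surj[OF cI x(1)] unfolding idx_def by blast
    have bj: "b j p = 1" unfolding b_def j using x idxgood[of j] j by (intro bump_one) (auto simp: good_def)
    have "eventually (\<lambda>n. Smax b n p = 1) sequentially"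
      unfolding eventually_sequentially
    proof (intro exI allI impI)
      fix n assume "Suc j \<le> n"
      then have "b j p \<le> Smax b n p" by (intro Smax_ge) simp
      then show "Smax b n p = 1" using bj Smax_bounds[of b n p, OF b01] by simp
    qed
    then show ?thesis by (rule tendsto_eventually)
  qed
  have Scont: "continuous_on UNIV (Smax b n)" for n
    by (rule Smax_cont) (simp add: b_def bump_cont)
  have Smeas: "Smax b n \<in> borel_measurable G0" for n
    by (rule G_meas[OF G0]) (rule borel_measurable_continuous_onI[OF Scont])
  have "(\<lambda>n. \<integral>p. Smax b n p \<partial>G0) \<longlonglongrightarrow> (\<integral>p. 1 \<partial>G0)"
  proof (rule integral_dominated_convergence[where w="\<lambda>_. 1"])
    show "(\<lambda>p. 1::real) \<in> borel_measurable G0" by simp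
    show "Smax b n \<in> borel_measurable G0" for n by (rule Smeas)
    show "integrable G0 (\<lambda>_. 1::real)" by simp
    show "AE p in G0. (\<lambda>n. Smax b n p) \<longlonglongrightarrow> 1"
      using AE_\<Omega>[OF G0] by (rule eventually_mono) (rule lim)
    show "AE p in G0. norm (Smax b n p) \<le> 1" for n
      by (rule AE_I2) (use Smax_bounds[of b n, OF b01] in auto)
  qed
  then have "(\<lambda>n. \<integral>p. Smax b n p \<partial>G0) \<longlonglongrightarrow> 1" by (simp add: G0.prob_space)
  then have "eventually (\<lambda>n. (\<integral>p. Smax b n p \<partial>G0) > 1 - e) sequentially"
    using e by (intro order_tendstoD) auto
  then obtain n where n: "(\<integral>p. Smax b n p \<partial>G0) > 1 - e" by (auto simp: eventually_sequentially)
  have c1: "\<forall>i. continuous_on UNIV (\<psi> i)"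
    unfolding \<psi>_def by (intro allI continuous_on_diff Scont)
  have c2: "\<forall>i p. 0 \<le> \<psi> i p \<and> \<psi> i p \<le> 1"
  proof (intro allI conjI)
    fix i p
    show "0 \<le> \<psi> i p" unfolding \<psi>_def using Smax_mono[of i "Suc i" b p] by simp
    show "\<psi> i p \<le> 1" unfolding \<psi>_def using Smax_bounds[of b i p, OF b01] Smax_bounds[of b "Suc i" p, OF b01] by (auto simp: max_def)
  qed
  have c3: "\<forall>p. (\<Sum>i<n. \<psi> i p) \<le> 1"
    unfolding \<psi>sum using Smax_bounds[of b n, OF b01] by simp
  have c4: "\<forall>i<n. q i \<in> \<Omega>"
  proof (intro allI impI)
    fix i assume "i < n"
    have g: "good (idx i)" by (rule idxgood)
    have "fst (idx i) \<in> cball (fst (idx i)) (2 * snd (idx i))" using g unfolding good_def by simp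
    then show "q i \<in> \<Omega>" using g unfolding good_def q_def by blast
  qed
  have c5: "\<forall>i<n. \<forall>p\<in>\<Omega>. \<psi> i p > 0 \<longrightarrow> Dr p (q i) \<le> e"
  proof (intro allI impI ballI)
    fix i p assume i: "i < n" and p: "p \<in> \<Omega>" and pos: "\<psi> i p > 0"
    have g: "good (idx i)" by (rule idxgood)
    have "b i p > 0" using Smax_pos_diff[of b i p, OF b01(1) b01(2)] pos unfolding \<psi>_def by simp
    then have "dist p (fst (idx i)) \<le> 2 * snd (idx i)"
      using g unfolding b_def good_def by (intro bump_pos) auto
    then show "Dr p (q i) \<le> e" using g unfolding good_def q_def by (auto simp: dist_commute)
  qed
  have c6: "(\<integral>p. (\<Sum>i<n. \<psi> i p) \<partial>G0) \<ge> 1 - e" unfolding \<psi>sum using n by simp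
  show ?thesis
    apply (rule exI[of _ n])
    apply (rule exI[of _ \<psi>])
    apply (rule exI[of _ q])
    using c1 c2 c3 c4 c5 c6 by blast
qed

end



lemma hell_ineq:
  fixes a b c d :: real
  assumes a: "0 \<le> a" and b: "0 \<le> b" and c: "0 \<le> c" and d: "d > 0"
  shows "(a - b)\<^sup>2 \<le> (a - c)\<^sup>2 + d * a\<^sup>2 + (1 / d + 1) * \<bar>b\<^sup>2 - c\<^sup>2\<bar>"
proof -
  have e1: "(d * a - (c - b))\<^sup>2 / d = d * a\<^sup>2 - 2 * a * (c - b) + (c - b)\<^sup>2 / d"
    using d by (simp add: field_simps power2_eq_square)
  have "0 \<le> (d * a - (c - b))\<^sup>2 / d" using d by simp
  then have 1: "2 * a * (c - b) \<le> d * a\<^sup>2 + (c - b)\<^sup>2 / d" using e1 by linarith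
  have cb: "\<bar>c - b\<bar> \<le> c + b" using b c by linarith
  have "(c - b)\<^sup>2 = \<bar>c - b\<bar> * \<bar>c - b\<bar>" by (simp add: power2_eq_square)
  also have "\<dots> \<le> \<bar>c - b\<bar> * (c + b)" by (rule mult_left_mono[OF cb]) simp
  also have "\<dots> = \<bar>b\<^sup>2 - c\<^sup>2\<bar>"
  proof -
    have "\<bar>b\<^sup>2 - c\<^sup>2\<bar> = \<bar>(c - b) * (c + b)\<bar>" by (simp add: power2_eq_square algebra_simps abs_minus_commute)
    also have "\<dots> = \<bar>c - b\<bar> * (c + b)" using b c by (simp add: abs_mult)
    finally show ?thesis by simp
  qed
  finally have 2: "(c - b)\<^sup>2 \<le> \<bar>b\<^sup>2 - c\<^sup>2\<bar>" .
  have 3: "(c - b)\<^sup>2 / d \<le> \<bar>b\<^sup>2 - c\<^sup>2\<bar> / d" using 2 d by (simp add: divide_right_mono)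
  have 4: "(a - b)\<^sup>2 = (a - c)\<^sup>2 + 2 * a * (c - b) + (b\<^sup>2 - c\<^sup>2)" by (simp add: power2_eq_square algebra_simps)
  have 5: "(1 / d + 1) * \<bar>b\<^sup>2 - c\<^sup>2\<bar> = \<bar>b\<^sup>2 - c\<^sup>2\<bar> / d + \<bar>b\<^sup>2 - c\<^sup>2\<bar>" by (simp add: algebra_simps)
  have 6: "b\<^sup>2 - c\<^sup>2 \<le> \<bar>b\<^sup>2 - c\<^sup>2\<bar>" by simp
  show ?thesis using 1 3 4 5 6 by linarith
qed

lemma dens_facts:
  assumes Y: "Y \<in> sets borel" and h: "h \<in> densities Y"
  shows "h \<in> borel_measurable (restrict_space lborel Y)" "integrable (restrict_space lborel Y) h"
    "\<And>y. y \<in> Y \<Longrightarrow> 0 \<le> h y" "integral\<^sup>L (restrict_space lborel Y) h = 1"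
proof -
  have YM: "Y \<inter> space lborel \<in> sets lborel" using Y by simp
  show "h \<in> borel_measurable (restrict_space lborel Y)" "\<And>y. y \<in> Y \<Longrightarrow> 0 \<le> h y"
    using h by (auto simp: densities_def)
  show "integrable (restrict_space lborel Y) h"
    using h unfolding densities_def set_integrable_def by (subst integrable_restrict_space[OF YM]) auto
  show "integral\<^sup>L (restrict_space lborel Y) h = 1"
    using h unfolding densities_def set_lebesgue_integral_def by (subst integral_restrict_space[OF YM]) auto
qed

lemma hellinger_eq:
  assumes Y: "Y \<in> sets borel"
  shows "hellinger Y f g = sqrt ((1/2) * (\<integral>y. (sqrt (f y) - sqrt (g y))\<^sup>2 \<partial>restrict_space lborel Y))"
proof -
  have YM: "Y \<inter> space lborel \<in> sets lborel" using Y by simp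
  show ?thesis unfolding hellinger_def set_lebesgue_integral_def
    by (subst integral_restrict_space[OF YM]) simp
qed

lemma hell_cont:
  assumes Y: "Y \<in> sets borel" and f: "f \<in> densities Y" and g0: "g0 \<in> densities Y"
    and H: "hellinger Y f g0 < r"
  shows "\<exists>\<eta>>0. \<forall>g\<in>densities Y. (\<integral>\<^sup>+y. ennreal \<bar>g y - g0 y\<bar> \<partial>restrict_space lborel Y) \<le> ennreal \<eta>
            \<longrightarrow> hellinger Y f g < r"
proof -
  define M where "M = restrict_space lborel Y"
  note df = dens_facts[OF Y, folded M_def]
  have spM: "space M = Y" unfolding M_def by (simp add: space_restrict_space)
  define sq where "sq g y = (sqrt (f y) - sqrt (g y))\<^sup>2" for g y
  have sqint: "integrable M (sq g)" if g: "g \<in> densities Y" for g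
  proof (rule Bochner_Integration.integrable_bound)
    show "integrable M (\<lambda>y. 2 * f y + 2 * g y)"
      by (intro Bochner_Integration.integrable_add integrable_mult_right df(2) f g)
    have [measurable]: "f \<in> borel_measurable M" "g \<in> borel_measurable M" using df(1) f g by auto
    show "sq g \<in> borel_measurable M" unfolding sq_def by measurable
    show "AE y in M. norm (sq g y) \<le> norm (2 * f y + 2 * g y)"
    proof (rule AE_I2)
      fix y assume "y \<in> space M"
      then have y: "y \<in> Y" using spM by simp
      have fy: "0 \<le> f y" and gy: "0 \<le> g y" using df(3)[OF f y] df(3)[OF g y] by auto
      have sqb: "(u - v)\<^sup>2 \<le> 2 * u\<^sup>2 + 2 * v\<^sup>2" for u v :: real
      proof -
        have "0 \<le> (u + v)\<^sup>2" by simp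
        moreover have "(u - v)\<^sup>2 = 2 * u\<^sup>2 + 2 * v\<^sup>2 - (u + v)\<^sup>2" by (simp add: power2_eq_square algebra_simps)
        ultimately show ?thesis by linarith
      qed
      have "sq g y \<le> 2 * (sqrt (f y))\<^sup>2 + 2 * (sqrt (g y))\<^sup>2"
        unfolding sq_def by (rule sqb)
      then show "norm (sq g y) \<le> norm (2 * f y + 2 * g y)" using fy gy by (simp add: sq_def)
    qed
  qed
  have heq: "hellinger Y f g = sqrt ((1/2) * (\<integral>y. sq g y \<partial>M))" for g
    unfolding hellinger_eq[OF Y] M_def sq_def ..
  define s0 where "s0 = (\<integral>y. sq g0 y \<partial>M)"
  have s0nn: "0 \<le> s0" unfolding s0_def sq_def by simp
  have "0 \<le> hellinger Y f g0" using heq[of g0] s0nn unfolding s0_def by simp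
  then have r: "r > 0" using H by linarith
  have "(1/2) * s0 = (sqrt ((1/2) * s0))\<^sup>2" using s0nn by simp
  also have "\<dots> < r\<^sup>2" using H heq[of g0] s0nn unfolding s0_def[symmetric]
    by (intro power_strict_mono) auto
  finally have s0r: "s0 < 2 * r\<^sup>2" by simp
  define gap where "gap = 2 * r\<^sup>2 - s0"
  have gap: "gap > 0" using s0r by (simp add: gap_def)
  define d where "d = gap / 4"
  have d: "d > 0" using gap by (simp add: d_def)
  define \<eta> where "\<eta> = gap / (4 * (1 / d + 1))"
  have \<eta>: "\<eta> > 0" unfolding \<eta>_def using gap d by (intro divide_pos_pos mult_pos_pos add_pos_pos) auto
  show ?thesis
  proof (intro exI[of _ \<eta>] conjI ballI impI \<eta>)
    fix g assume g: "g \<in> densities Y"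
      and L: "(\<integral>\<^sup>+y. ennreal \<bar>g y - g0 y\<bar> \<partial>restrict_space lborel Y) \<le> ennreal \<eta>"
    have Lint: "integrable M (\<lambda>y. \<bar>g y - g0 y\<bar>)"
      by (intro integrable_abs Bochner_Integration.integrable_diff df(2) g g0)
    have "ennreal (\<integral>y. \<bar>g y - g0 y\<bar> \<partial>M) = (\<integral>\<^sup>+y. ennreal \<bar>g y - g0 y\<bar> \<partial>M)"
      by (rule nn_integral_eq_integral[OF Lint, symmetric]) simp
    then have "ennreal (\<integral>y. \<bar>g y - g0 y\<bar> \<partial>M) \<le> ennreal \<eta>" using L unfolding M_def by simp
    then have Lle: "(\<integral>y. \<bar>g y - g0 y\<bar> \<partial>M) \<le> \<eta>" using \<eta> by simp
    have "(\<integral>y. sq g y \<partial>M) \<le> (\<integral>y. sq g0 y + d * f y + (1 / d + 1) * \<bar>g y - g0 y\<bar> \<partial>M)"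
    proof (rule integral_mono)
      show "integrable M (sq g)" by (rule sqint[OF g])
      show "integrable M (\<lambda>y. sq g0 y + d * f y + (1 / d + 1) * \<bar>g y - g0 y\<bar>)"
        by (intro Bochner_Integration.integrable_add integrable_mult_right sqint g0 df(2) f Lint)
      fix y assume "y \<in> space M"
      then have y: "y \<in> Y" using spM by simp
      have fy: "0 \<le> f y" and gy: "0 \<le> g y" and g0y: "0 \<le> g0 y" using df(3)[OF f y] df(3)[OF g y] df(3)[OF g0 y] by auto
      from hell_ineq[of "sqrt (f y)" "sqrt (g y)" "sqrt (g0 y)" d] fy gy g0y d
      show "sq g y \<le> sq g0 y + d * f y + (1 / d + 1) * \<bar>g y - g0 y\<bar>" by (simp add: sq_def)
    qed
    also have "\<dots> = s0 + d * 1 + (1 / d + 1) * (\<integral>y. \<bar>g y - g0 y\<bar> \<partial>M)"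
      unfolding s0_def using df(4)[OF f]
      by (simp add: Bochner_Integration.integral_add sqint g0 df(2) f Lint)
    also have "\<dots> \<le> s0 + d + (1 / d + 1) * \<eta>"
      using Lle d by (simp add: mult_left_mono add_pos_nonneg)
    also have "(1 / d + 1) * \<eta> = gap / 4"
    proof -
      define cc where "cc = 1 / d + 1"
      have cc: "cc > 0" unfolding cc_def using d by (intro add_pos_pos) auto
      have "cc * (gap / (4 * cc)) = gap / 4" using cc by (simp add: field_simps)
      then show ?thesis unfolding \<eta>_def cc_def .
    qed
    finally have I1: "(\<integral>y. sq g y \<partial>M) \<le> s0 + d + gap / 4" .
    have dg: "d = gap / 4" by (simp add: d_def)
    have "(\<integral>y. sq g y \<partial>M) < s0 + gap" using I1 gap dg by linarith
    then have "(\<integral>y. sq g y \<partial>M) < 2 * r\<^sup>2" by (simp add: gap_def)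
    then have "sqrt ((1/2) * (\<integral>y. sq g y \<partial>M)) < sqrt (r\<^sup>2)" by (intro real_sqrt_less_mono) simp
    then show "hellinger Y f g < r" using r heq[of g] by simp
  qed
qed



lemma ennreal_plus3:
  fixes x y z :: real
  shows "0 \<le> x \<Longrightarrow> 0 \<le> y \<Longrightarrow> 0 \<le> z \<Longrightarrow> ennreal x + (ennreal y + ennreal z) = ennreal (x + (y + z))"
  by (simp add: ennreal_plus[symmetric] del: ennreal_plus)

context mixk begin

lemma L1_nbhd:
  assumes G0: "G0 \<in> Dk \<Gamma> \<Gamma>0" and e: "e > 0"
  shows "\<exists>N. openin (weak_conv_topology \<Gamma>) N \<and> G0 \<in> N \<and>
     (\<forall>G\<in>N \<inter> Dk \<Gamma> \<Gamma>0. (\<integral>\<^sup>+y. ennreal \<bar>mixture k G y - mixture k G0 y\<bar> \<partial>MY) \<le> ennreal (6 * e))"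
proof -
  obtain n :: nat and \<psi> :: "nat \<Rightarrow> real \<times> real \<Rightarrow> real" and q where c1: "\<forall>i. continuous_on UNIV (\<psi> i)" and c2: "\<forall>i p. 0 \<le> \<psi> i p \<and> \<psi> i p \<le> 1"
    and c3: "\<forall>p. (\<Sum>i<n. \<psi> i p) \<le> 1" and c4: "\<forall>i<n. q i \<in> \<Omega>"
    and c5: "\<forall>i<n. \<forall>p\<in>\<Omega>. \<psi> i p > 0 \<longrightarrow> Dr p (q i) \<le> e"
    and c6: "(\<integral>p. (\<Sum>i<n. \<psi> i p) \<partial>G0) \<ge> 1 - e"
    using construct[OF G0 e] by blast
  have \<psi>m: "\<psi> i \<in> borel_measurable borel" for i
    using c1 by (intro borel_measurable_continuous_onI) auto
  define c0 where "c0 i = (\<integral>p. \<psi> i p \<partial>G0)" for i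
  define \<delta> where "\<delta> = e / (real n + 1)"
  have \<delta>: "\<delta> > 0" using e by (simp add: \<delta>_def)
  have n\<delta>: "real n * \<delta> \<le> e" using e by (simp add: \<delta>_def field_simps)
  define N where "N = {G \<in> prob_measures \<Gamma>. \<forall>i<n. (\<integral>x. \<psi> i x \<partial>G) \<in> ball (c0 i) \<delta>}"
  have Nopen: "openin (weak_conv_topology \<Gamma>) N"
    unfolding N_def
  proof (rule weak_finite_open)
    fix i
    show "continuous_on \<Gamma> (\<psi> i) \<and> bounded (\<psi> i ` \<Gamma>)"
      using c1 c2 by (auto intro: continuous_on_subset simp: bounded_iff intro!: exI[of _ 1])
  qed
  have G0N: "G0 \<in> N" using G0 \<delta> by (auto simp: N_def c0_def Dk_def)
  have est': "(\<integral>\<^sup>+y. ennreal \<bar>mixture k G y - (\<Sum>i<n. (\<integral>p. \<psi> i p \<partial>G) * k y (q i))\<bar> \<partial>MY)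
           \<le> ennreal (1 - (\<integral>p. (\<Sum>i<n. \<psi> i p) \<partial>G) + e)" if G: "G \<in> Dk \<Gamma> \<Gamma>0" for G
    by (rule est[OF G \<psi>m]) (use c2 c3 c4 c5 e in auto)
  have intS: "(\<integral>p. (\<Sum>i<n. \<psi> i p) \<partial>G) = (\<Sum>i<n. \<integral>p. \<psi> i p \<partial>G)" if G: "G \<in> Dk \<Gamma> \<Gamma>0" for G
  proof -
    interpret G: prob_space G by (rule G_prob[OF G])
    show ?thesis
      by (rule Bochner_Integration.integral_sum, rule G.integrable_const_bound[where B=1])
         (use c2 in \<open>auto intro!: G_meas[OF G \<psi>m]\<close>)
  qed
  show ?thesis
  proof (intro exI[of _ N] conjI Nopen G0N ballI)
    fix G assume GN: "G \<in> N \<inter> Dk \<Gamma> \<Gamma>0"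
    then have G: "G \<in> Dk \<Gamma> \<Gamma>0" by simp
    define c where "c i = (\<integral>p. \<psi> i p \<partial>G)" for i
    have cc: "\<bar>c i - c0 i\<bar> < \<delta>" if "i < n" for i
      using GN that by (auto simp: N_def c_def dist_real_def abs_minus_commute)
    have sumdiff: "(\<Sum>i<n. \<bar>c i - c0 i\<bar>) \<le> e"
    proof -
      have "(\<Sum>i<n. \<bar>c i - c0 i\<bar>) \<le> (\<Sum>i<n. \<delta>)" by (rule sum_mono) (use cc in \<open>auto intro: less_imp_le\<close>)
      then show ?thesis using n\<delta> by simp
    qed
    define T where "T y = (\<Sum>i<n. c i * k y (q i))" for y
    define T0 where "T0 y = (\<Sum>i<n. c0 i * k y (q i))" for y
    have Tm: "T \<in> borel_measurable MY" "T0 \<in> borel_measurable MY"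
      unfolding T_def T0_def using k_meas_y by (auto intro!: borel_measurable_sum borel_measurable_times)
    have d1: "(\<integral>\<^sup>+y. ennreal \<bar>mixture k G y - T y\<bar> \<partial>MY) \<le> ennreal (1 - (\<Sum>i<n. c i) + e)"
      using est'[OF G] intS[OF G] unfolding T_def c_def by simp
    have d3: "(\<integral>\<^sup>+y. ennreal \<bar>T0 y - mixture k G0 y\<bar> \<partial>MY) \<le> ennreal (1 - (\<Sum>i<n. c0 i) + e)"
      using est'[OF G0] intS[OF G0] unfolding T0_def c0_def by (simp add: abs_minus_commute)
    have d2: "(\<integral>\<^sup>+y. ennreal \<bar>T y - T0 y\<bar> \<partial>MY) \<le> ennreal (\<Sum>i<n. \<bar>c i - c0 i\<bar>)"
      unfolding T_def T0_def by (rule L1_sum) (use c4 in auto)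
    have s0: "(\<Sum>i<n. c0 i) \<ge> 1 - e" using c6 intS[OF G0] unfolding c0_def by simp
    have s1: "(\<Sum>i<n. c0 i) - (\<Sum>i<n. c i) \<le> (\<Sum>i<n. \<bar>c i - c0 i\<bar>)"
    proof -
      have "(\<Sum>i<n. c0 i) - (\<Sum>i<n. c i) = (\<Sum>i<n. c0 i - c i)" by (simp add: sum_subtractf)
      also have "\<dots> \<le> (\<Sum>i<n. \<bar>c i - c0 i\<bar>)" by (rule sum_mono) auto
      finally show ?thesis .
    qed
    have S1: "(\<Sum>i<n. c i) \<le> 1"
    proof -
      have "(\<Sum>i<n. c i) = (\<integral>p. (\<Sum>i<n. \<psi> i p) \<partial>G)" using intS[OF G] unfolding c_def by simp
      also have "\<dots> \<le> (\<integral>p. 1 \<partial>G)"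
      proof -
        interpret G: prob_space G by (rule G_prob[OF G])
        show ?thesis
          by (rule integral_mono) (use c3 intS in \<open>auto intro!: Bochner_Integration.integrable_sum G.integrable_const_bound[where B=1] G_meas[OF G \<psi>m] simp: c2\<close>)
      qed
      also have "\<dots> = 1" using G_prob[OF G] by (simp add: prob_space.prob_space)
      finally show ?thesis .
    qed
    have S0: "(\<Sum>i<n. c0 i) \<le> 1"
    proof -
      have "(\<Sum>i<n. c0 i) = (\<integral>p. (\<Sum>i<n. \<psi> i p) \<partial>G0)" using intS[OF G0] unfolding c0_def by simp
      also have "\<dots> \<le> (\<integral>p. 1 \<partial>G0)"
      proof -
        interpret G0: prob_space G0 by (rule G_prob[OF G0])
        show ?thesis
          by (rule integral_mono) (use c3 in \<open>auto intro!: Bochner_Integration.integrable_sum G0.integrable_const_bound[where B=1] G_meas[OF G0 \<psi>m] simp: c2\<close>)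
      qed
      also have "\<dots> = 1" using G_prob[OF G0] by (simp add: prob_space.prob_space)
      finally show ?thesis .
    qed
    have "(\<integral>\<^sup>+y. ennreal \<bar>mixture k G y - mixture k G0 y\<bar> \<partial>MY)
        \<le> (\<integral>\<^sup>+y. ennreal \<bar>mixture k G y - T y\<bar> \<partial>MY) + (\<integral>\<^sup>+y. ennreal \<bar>T y - mixture k G0 y\<bar> \<partial>MY)"
      by (rule L1_tri[OF mix_meas[OF G] Tm(1) mix_meas[OF G0]])
    also have "(\<integral>\<^sup>+y. ennreal \<bar>T y - mixture k G0 y\<bar> \<partial>MY)
        \<le> (\<integral>\<^sup>+y. ennreal \<bar>T y - T0 y\<bar> \<partial>MY) + (\<integral>\<^sup>+y. ennreal \<bar>T0 y - mixture k G0 y\<bar> \<partial>MY)"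
      by (rule L1_tri[OF Tm mix_meas[OF G0]])
    also have "(\<integral>\<^sup>+y. ennreal \<bar>mixture k G y - T y\<bar> \<partial>MY) + ((\<integral>\<^sup>+y. ennreal \<bar>T y - T0 y\<bar> \<partial>MY) + (\<integral>\<^sup>+y. ennreal \<bar>T0 y - mixture k G0 y\<bar> \<partial>MY))
        \<le> ennreal (1 - (\<Sum>i<n. c i) + e) + (ennreal (\<Sum>i<n. \<bar>c i - c0 i\<bar>) + ennreal (1 - (\<Sum>i<n. c0 i) + e))"
      by (intro add_mono d1 d2 d3)
    also have "\<dots> = ennreal ((1 - (\<Sum>i<n. c i) + e) + ((\<Sum>i<n. \<bar>c i - c0 i\<bar>) + (1 - (\<Sum>i<n. c0 i) + e)))"
      using S1 S0 e by (intro ennreal_plus3) (auto intro: sum_nonneg)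
    also have "\<dots> \<le> ennreal (6 * e)"
      by (rule ennreal_leI) (use s0 s1 sumdiff in linarith)
    finally show "(\<integral>\<^sup>+y. ennreal \<bar>mixture k G y - mixture k G0 y\<bar> \<partial>MY) \<le> ennreal (6 * e)"
      by (simp add: add_left_mono)
  qed
qed

theorem mixture_measurable:
  "mixture k \<in> measurable (borel_of (subtopology (weak_conv_topology \<Gamma>) (Dk \<Gamma> \<Gamma>0)))
                           (borel_of (hellinger_topology Y))"
proof (rule cont_map_measurable)
  let ?W = "subtopology (weak_conv_topology \<Gamma>) (Dk \<Gamma> \<Gamma>0)"
  let ?S = "{{g \<in> densities Y. hellinger Y f g < r} | f r. f \<in> densities Y \<and> r > 0}"
  have tW: "topspace ?W = Dk \<Gamma> \<Gamma>0"
    by (auto simp: topspace_weak Dk_def)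
  have US: "\<Union> ?S = densities Y"
    using hellinger_topspace[of Y] unfolding hellinger_topology_def topology_generated_by_topspace .
  show "continuous_map ?W (hellinger_topology Y) (mixture k)"
    unfolding hellinger_topology_def continuous_on_generated_topo_iff
  proof (intro conjI allI impI)
    show "mixture k ` topspace ?W \<subseteq> \<Union> ?S"
      unfolding US tW using mix_density by auto
    fix U assume "U \<in> ?S"
    then have "\<exists>f r. U = {g \<in> densities Y. hellinger Y f g < r} \<and> f \<in> densities Y \<and> r > 0"
      by (simp only: mem_Collect_eq)
    then obtain f r where U: "U = {g \<in> densities Y. hellinger Y f g < r}" and f: "f \<in> densities Y" and r: "r > 0"
      by blast
    have eq: "mixture k -` U \<inter> topspace ?W = {G \<in> Dk \<Gamma> \<Gamma>0. hellinger Y f (mixture k G) < r}"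
      unfolding U tW using mix_density by auto
    show "openin ?W (mixture k -` U \<inter> topspace ?W)"
      unfolding eq
    proof (subst openin_subopen, intro ballI)
      fix G0 assume "G0 \<in> {G \<in> Dk \<Gamma> \<Gamma>0. hellinger Y f (mixture k G) < r}"
      then have G0: "G0 \<in> Dk \<Gamma> \<Gamma>0" and H0: "hellinger Y f (mixture k G0) < r" by auto
      obtain \<eta> where \<eta>: "\<eta> > 0" "\<And>g. g \<in> densities Y \<Longrightarrow>
          (\<integral>\<^sup>+y. ennreal \<bar>g y - mixture k G0 y\<bar> \<partial>MY) \<le> ennreal \<eta> \<Longrightarrow> hellinger Y f g < r"
        using hell_cont[OF Yb f mix_density[OF G0] H0] by blast
      obtain N where N: "openin (weak_conv_topology \<Gamma>) N" "G0 \<in> N"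
        "\<And>G. G \<in> N \<inter> Dk \<Gamma> \<Gamma>0 \<Longrightarrow> (\<integral>\<^sup>+y. ennreal \<bar>mixture k G y - mixture k G0 y\<bar> \<partial>MY) \<le> ennreal (6 * (\<eta> / 6))"
        using L1_nbhd[OF G0, of "\<eta> / 6"] \<eta>(1) by auto
      show "\<exists>T. openin ?W T \<and> G0 \<in> T \<and> T \<subseteq> {G \<in> Dk \<Gamma> \<Gamma>0. hellinger Y f (mixture k G) < r}"
      proof (intro exI conjI)
        show "openin ?W (N \<inter> Dk \<Gamma> \<Gamma>0)" using N(1) by (auto simp: openin_subtopology)
        show "G0 \<in> N \<inter> Dk \<Gamma> \<Gamma>0" using N(2) G0 by simp
        show "N \<inter> Dk \<Gamma> \<Gamma>0 \<subseteq> {G \<in> Dk \<Gamma> \<Gamma>0. hellinger Y f (mixture k G) < r}"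
        proof
          fix G assume GN: "G \<in> N \<inter> Dk \<Gamma> \<Gamma>0"
          have "hellinger Y f (mixture k G) < r"
            by (rule \<eta>(2)[OF mix_density]) (use GN N(3)[OF GN] in auto)
          then show "G \<in> {G \<in> Dk \<Gamma> \<Gamma>0. hellinger Y f (mixture k G) < r}" using GN by simp
        qed
      qed
    qed
  qed
qed

end



lemma Gamma_real_meas: "(Gamma :: real \<Rightarrow> real) \<in> borel_measurable borel"
proof (rule borel_measurable_continuous_countable_exceptions)
  have "(\<int>\<^sub>\<le>\<^sub>0 :: real set) \<subseteq> range of_int"
    using nonpos_Ints_subset_Ints Ints_def by blast
  then show "countable (\<int>\<^sub>\<le>\<^sub>0 :: real set)" by (rule countable_subset) simp
  show "continuous_on (- \<int>\<^sub>\<le>\<^sub>0) (Gamma :: real \<Rightarrow> real)"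
    by (rule continuous_on_Gamma) auto
qed

lemma Gamma_real_meas'[measurable]: "f \<in> borel_measurable M \<Longrightarrow> (\<lambda>x. Gamma (f x) :: real) \<in> borel_measurable M"
  using measurable_compose[OF _ Gamma_real_meas] by blast

lemma Gamma_real_nz[simp]:
  assumes "(x::real) > 0" shows "Gamma x \<noteq> 0"
proof -
  have "Gamma x > 0" using assms by (rule Gamma_real_pos)
  then show ?thesis by linarith
qed

lemma pos_not_nonpos_Int: "(x::real) > 0 \<Longrightarrow> x \<notin> \<int>\<^sub>\<le>\<^sub>0"
  using nonpos_Ints_nonpos by fastforce

lemma gauss_eq: "gauss_kernel y p = (2 * pi * snd p) powr (-1/2) * exp (- ((y - fst p)^2) / (2 * snd p))"
  by (simp add: gauss_kernel_def case_prod_beta)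

lemma gauss_normal: "\<phi> > 0 \<Longrightarrow> gauss_kernel y (\<theta>, \<phi>) = normal_density \<theta> (sqrt \<phi>) y"
proof -
  assume \<phi>: "\<phi> > 0"
  have "(2 * pi * \<phi>) powr (-1/2) = 1 / sqrt (2 * pi * \<phi>)"
    using \<phi> by (simp add: powr_minus_divide powr_half_sqrt[symmetric] del: powr_half_sqrt)
  then show ?thesis using \<phi> by (simp add: gauss_eq normal_density_def)
qed

lemma gauss_mixk: "mixk gauss_kernel UNIV (param_space UNIV) (UNIV \<times> {0})"
proof -
  have \<Omega>: "param_space UNIV - UNIV \<times> {0} = UNIV \<times> {0<..}" by (auto simp: param_space_def)
  show ?thesis
  proof (unfold_locales, unfold \<Omega>)
    show "UNIV \<in> sets (borel :: real measure)" by simp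
    show "param_space UNIV \<in> sets borel" unfolding param_space_def
      by (intro borel_closed closed_Un closed_Times closed_atLeast closed_singleton closed_atLeastAtMost closed_insert closed_UNIV)
    show "UNIV \<times> {0::real} \<in> sets borel" by (intro borel_closed closed_Un closed_Times closed_atLeast closed_singleton closed_atLeastAtMost closed_insert closed_UNIV)
    show "UNIV \<times> {0} \<subseteq> param_space UNIV" by (auto simp: param_space_def)
    show "open (UNIV \<times> {0::real<..})" by (intro open_Times) auto
    show "0 \<le> gauss_kernel y p" if "p \<in> UNIV \<times> {0<..}" for p y by (simp add: gauss_eq)
    show "set_integrable lborel UNIV (\<lambda>y. gauss_kernel y p)" if hp: "p \<in> UNIV \<times> {0<..}" for p
    proof -
      obtain \<theta> \<phi> where p: "p = (\<theta>, \<phi>)" "\<phi> > 0" using hp by (cases p) auto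
      show ?thesis unfolding set_integrable_def p using p(2)
        by (simp add: gauss_normal integrable_normal_density)
    qed
    show "(\<integral>y\<in>UNIV. gauss_kernel y p \<partial>lborel) = 1" if hp: "p \<in> UNIV \<times> {0<..}" for p
    proof -
      obtain \<theta> \<phi> where p: "p = (\<theta>, \<phi>)" "\<phi> > 0" using hp by (cases p) auto
      show ?thesis unfolding set_lebesgue_integral_def p using p(2)
        by (simp add: gauss_normal integral_normal_density)
    qed
    have "(\<lambda>x. gauss_kernel (fst x) (snd x)) \<in> borel_measurable (borel \<Otimes>\<^sub>M (borel \<Otimes>\<^sub>M borel))"
      unfolding gauss_eq by measurable
    then show "(\<lambda>x. gauss_kernel (fst x) (snd x)) \<in> borel_measurable borel"
      by (simp only: borel_prod)
    show "continuous_on (UNIV \<times> {0<..}) (gauss_kernel y)" for y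
      unfolding gauss_eq by (intro continuous_intros) auto
  qed
qed

lemma gamma_eq: "gamma_kernel y p = (snd p / fst p) powr snd p / Gamma (snd p) * y powr (snd p - 1) * exp (- snd p * y / fst p)"
  by (simp add: gamma_kernel_def case_prod_beta)

lemma gamma_int:
  assumes \<theta>: "\<theta> > 0" and \<phi>: "\<phi> > 0"
  shows "set_integrable lborel {0..} (\<lambda>y. gamma_kernel y (\<theta>, \<phi>))"
    "(\<integral>y\<in>{0..}. gamma_kernel y (\<theta>, \<phi>) \<partial>lborel) = 1"
proof -
  define l where "l = \<phi> / \<theta>"
  have l: "l > 0" using \<theta> \<phi> by (simp add: l_def)
  define h where "h t = indicator {0..} t * t powr (\<phi> - 1) / exp t" for t :: real
  have hnn: "0 \<le> h t" for t by (simp add: h_def indicator_def)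
  have hm: "h \<in> borel_measurable borel" unfolding h_def by measurable
  have hnn_int: "(\<integral>\<^sup>+t. ennreal (h t) \<partial>lborel) = ennreal (Gamma \<phi>)"
    using Gamma_conv_nn_integral_real[OF \<phi>] unfolding h_def by simp
  have hint: "integrable lborel h"
    by (rule integrableI_nonneg) (use hm hnn hnn_int in auto)
  have hI: "(\<integral>t. h t \<partial>lborel) = Gamma \<phi>"
    using integral_eq_nn_integral[of h lborel] hm hnn hnn_int \<phi> by (simp add: less_imp_le)
  have eq: "indicator {0..} y *\<^sub>R gamma_kernel y (\<theta>, \<phi>) = (l / Gamma \<phi>) * h (0 + l * y)" for y
  proof (cases "y \<ge> 0")
    case True
    have ly: "(l * y) powr (\<phi> - 1) = l powr (\<phi> - 1) * y powr (\<phi> - 1)"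
      using l True by (simp add: powr_mult)
    have lp: "l powr \<phi> = l * l powr (\<phi> - 1)"
      using l by (simp add: powr_mult_base)
    have ar: "- \<phi> * y / \<theta> = - (l * y)" using \<theta> by (simp add: l_def field_simps)
    have k: "gamma_kernel y (\<theta>, \<phi>) = l powr \<phi> / Gamma \<phi> * y powr (\<phi> - 1) * exp (- (l * y))"
      unfolding gamma_eq fst_conv snd_conv ar by (simp add: l_def)
    have hh: "h (0 + l * y) = l powr (\<phi> - 1) * y powr (\<phi> - 1) / exp (l * y)"
      using True l by (simp add: h_def ly indicator_def)
    show ?thesis using True unfolding k hh
      by (simp add: lp exp_minus field_simps indicator_def)
  next
    case False
    then have "\<not> (0 \<le> l * y)" using l by (simp add: zero_le_mult_iff)
    then show ?thesis using False by (simp add: h_def indicator_def)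
  qed
  have i2: "integrable lborel (\<lambda>y. h (0 + l * y))"
    using lborel_integrable_real_affine_iff[of l h 0] l hint by simp
  show "set_integrable lborel {0..} (\<lambda>y. gamma_kernel y (\<theta>, \<phi>))"
    unfolding set_integrable_def eq by (intro integrable_mult_right i2)
  have "(\<integral>t. h t \<partial>lborel) = \<bar>l\<bar> *\<^sub>R (\<integral>y. h (0 + l * y) \<partial>lborel)"
    by (rule lborel_integral_real_affine) (use l in simp)
  then have "(\<integral>y. h (0 + l * y) \<partial>lborel) = Gamma \<phi> / l" using l hI by simp
  then show "(\<integral>y\<in>{0..}. gamma_kernel y (\<theta>, \<phi>) \<partial>lborel) = 1"
    unfolding set_lebesgue_integral_def eq using l Gamma_real_pos[OF \<phi>] by simp
qed

lemma gamma_mixk: "mixk gamma_kernel {0..} (param_space {0..}) ({0..} \<times> {0} \<union> {0} \<times> {0..})"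
proof -
  have \<Omega>: "param_space {0..} - ({0..} \<times> {0} \<union> {0} \<times> {0..}) = {0<..} \<times> {0::real<..}"
    by (auto simp: param_space_def)
  show ?thesis
  proof (unfold_locales, unfold \<Omega>)
    show "{0..} \<in> sets (borel :: real measure)" by simp
    show "param_space {0..} \<in> sets borel" unfolding param_space_def
      by (intro borel_closed closed_Un closed_Times closed_atLeast closed_singleton closed_atLeastAtMost closed_insert closed_UNIV)
    show "({0..} \<times> {0} \<union> {0} \<times> {0..} :: (real \<times> real) set) \<in> sets borel"
      by (intro borel_closed closed_Un closed_Times closed_atLeast closed_singleton closed_atLeastAtMost closed_insert)
    show "{0..} \<times> {0} \<union> {0} \<times> {0..} \<subseteq> param_space {0..}" by (auto simp: param_space_def)
    show "open ({0<..} \<times> {0<..} :: (real \<times> real) set)" by (intro open_Times) auto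
    show "0 \<le> gamma_kernel y p" if "p \<in> {0<..} \<times> {0<..}" "y \<in> {0..}" for p y
      using that by (auto simp: gamma_eq intro!: mult_nonneg_nonneg divide_nonneg_nonneg less_imp_le[OF Gamma_real_pos])
    show "set_integrable lborel {0..} (\<lambda>y. gamma_kernel y p)" if "p \<in> {0<..} \<times> {0<..}" for p
      using that gamma_int(1)[of "fst p" "snd p"] by (cases p) auto
    show "(\<integral>y\<in>{0..}. gamma_kernel y p \<partial>lborel) = 1" if "p \<in> {0<..} \<times> {0<..}" for p
      using that gamma_int(2)[of "fst p" "snd p"] by (cases p) auto
    have "(\<lambda>x. gamma_kernel (fst x) (snd x)) \<in> borel_measurable (borel \<Otimes>\<^sub>M (borel \<Otimes>\<^sub>M borel))"
      unfolding gamma_eq by measurable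
    then show "(\<lambda>x. gamma_kernel (fst x) (snd x)) \<in> borel_measurable borel"
      by (simp only: borel_prod)
    show "continuous_on ({0<..} \<times> {0<..}) (gamma_kernel y)" if "y \<in> {0..}" for y
    proof (cases "y = 0")
      case True
      then have "gamma_kernel y = (\<lambda>p. 0)" by (auto simp: gamma_eq fun_eq_iff)
      then show ?thesis by (simp add: continuous_on_const)
    next
      case False
      then have y: "y > 0" using that by simp
      have cG: "continuous_on ({0<..} \<times> {0<..}) (\<lambda>p::real\<times>real. Gamma (snd p))"
        by (rule continuous_on_compose2[OF continuous_on_Gamma[of "{0<..}::real set"] continuous_on_snd])
           (auto simp: pos_not_nonpos_Int)
      show ?thesis unfolding gamma_eq
        by (intro continuous_intros cG) (use y in \<open>auto simp: Gamma_real_nz\<close>)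
    qed
  qed
qed

lemma beta_eq: "beta_kernel y p = Gamma (snd p) / (Gamma (fst p * snd p) * Gamma ((1 - fst p) * snd p))
       * y powr (fst p * snd p - 1) * (1 - y) powr ((1 - fst p) * snd p - 1)"
  by (simp add: beta_kernel_def case_prod_beta)

lemma beta_int:
  assumes \<theta>: "0 < \<theta>" "\<theta> < 1" and \<phi>: "\<phi> > 0"
  shows "set_integrable lborel {0..1} (\<lambda>y. beta_kernel y (\<theta>, \<phi>))"
    "(\<integral>y\<in>{0..1}. beta_kernel y (\<theta>, \<phi>) \<partial>lborel) = 1"
proof -
  define a where "a = \<theta> * \<phi>"
  define b where "b = (1 - \<theta>) * \<phi>"
  have a: "a > 0" and b: "b > 0" using \<theta> \<phi> by (simp_all add: a_def b_def)
  have ab: "a + b = \<phi>" by (simp add: a_def b_def algebra_simps)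
  define C where "C = Gamma \<phi> / (Gamma a * Gamma b)"
  have eq: "beta_kernel y (\<theta>, \<phi>) = C * (y powr (a - 1) * (1 - y) powr (b - 1))" for y
    by (simp add: beta_eq C_def a_def b_def)
  have si: "set_integrable lborel {0..1} (\<lambda>t. t powr (a - 1) * (1 - t) powr (b - 1))"
    by (rule integrable_Beta[OF a b])
  have E: "(\<lambda>x. indicat_real {0..1} x *\<^sub>R beta_kernel x (\<theta>, \<phi>))
      = (\<lambda>x. C * (indicat_real {0..1} x *\<^sub>R (x powr (a - 1) * (1 - x) powr (b - 1))))"
    by (rule ext) (simp add: eq)
  show "set_integrable lborel {0..1} (\<lambda>y. beta_kernel y (\<theta>, \<phi>))"
    unfolding set_integrable_def E by (rule integrable_mult_right) (rule si[unfolded set_integrable_def])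
  have "(\<integral>y\<in>{0..1}. (y powr (a - 1) * (1 - y) powr (b - 1)) \<partial>lborel) = Beta a b"
    using set_borel_integral_eq_integral(2)[OF si] has_integral_Beta_real[OF a b] by (simp add: integral_unique)
  then have "(\<integral>x. indicat_real {0..1} x *\<^sub>R (x powr (a - 1) * (1 - x) powr (b - 1)) \<partial>lborel) = Beta a b"
    unfolding set_lebesgue_integral_def .
  then show "(\<integral>y\<in>{0..1}. beta_kernel y (\<theta>, \<phi>) \<partial>lborel) = 1"
    unfolding set_lebesgue_integral_def E using Gamma_real_pos[OF a] Gamma_real_pos[OF b] Gamma_real_pos[OF \<phi>]
    by (simp add: C_def Beta_def ab)
qed

lemma beta_mixk: "mixk beta_kernel {0..1} (param_space {0..1}) ({0..1} \<times> {0} \<union> {0, 1} \<times> {0..})"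
proof -
  have \<Omega>: "param_space {0..1} - ({0..1} \<times> {0} \<union> {0, 1} \<times> {0..}) = {0<..<1} \<times> {0::real<..}"
    by (auto simp: param_space_def)
  show ?thesis
  proof (unfold_locales, unfold \<Omega>)
    show "{0..1} \<in> sets (borel :: real measure)" by simp
    show "param_space {0..1} \<in> sets borel" unfolding param_space_def
      by (intro borel_closed closed_Un closed_Times closed_atLeast closed_singleton closed_atLeastAtMost closed_insert closed_UNIV)
    show "({0..1} \<times> {0} \<union> {0, 1} \<times> {0..} :: (real \<times> real) set) \<in> sets borel"
      by (intro borel_closed closed_Un closed_Times closed_atLeast closed_singleton closed_atLeastAtMost closed_insert)
    show "{0..1} \<times> {0} \<union> {0, 1} \<times> {0..} \<subseteq> param_space {0..1}" by (auto simp: param_space_def)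
    show "open ({0<..<1} \<times> {0<..} :: (real \<times> real) set)" by (intro open_Times) auto
    show "0 \<le> beta_kernel y p" if "p \<in> {0<..<1} \<times> {0<..}" "y \<in> {0..1}" for p y
      using that by (auto simp: beta_eq intro!: mult_nonneg_nonneg divide_nonneg_nonneg less_imp_le[OF Gamma_real_pos])
    show "set_integrable lborel {0..1} (\<lambda>y. beta_kernel y p)" if "p \<in> {0<..<1} \<times> {0<..}" for p
      using that beta_int(1)[of "fst p" "snd p"] by (cases p) auto
    show "(\<integral>y\<in>{0..1}. beta_kernel y p \<partial>lborel) = 1" if "p \<in> {0<..<1} \<times> {0<..}" for p
      using that beta_int(2)[of "fst p" "snd p"] by (cases p) auto
    have "(\<lambda>x. beta_kernel (fst x) (snd x)) \<in> borel_measurable (borel \<Otimes>\<^sub>M (borel \<Otimes>\<^sub>M borel))"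
      unfolding beta_eq by measurable
    then show "(\<lambda>x. beta_kernel (fst x) (snd x)) \<in> borel_measurable borel"
      by (simp only: borel_prod)
    show "continuous_on ({0<..<1} \<times> {0<..}) (beta_kernel y)" if "y \<in> {0..1}" for y
    proof (cases "y = 0 \<or> y = 1")
      case True
      then have "beta_kernel y = (\<lambda>p. 0)" by (auto simp: beta_eq fun_eq_iff)
      then show ?thesis by (simp add: continuous_on_const)
    next
      case False
      then have y: "y > 0" "y < 1" using that by auto
      let ?O = "{0<..<1} \<times> {0<..} :: (real \<times> real) set"
      have cG1: "continuous_on ?O (\<lambda>p. Gamma (snd p))"
        by (rule continuous_on_compose2[OF continuous_on_Gamma[of "{0<..}::real set"] continuous_on_snd])
           (auto simp: pos_not_nonpos_Int)
      have cG2: "continuous_on ?O (\<lambda>p. Gamma (fst p * snd p))"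
      proof -
        have "continuous_on ?O (Gamma \<circ> (\<lambda>p. fst p * snd p))"
          by (intro continuous_on_compose continuous_intros continuous_on_Gamma)
             (auto simp: pos_not_nonpos_Int zero_less_mult_iff)
        then show ?thesis by (simp add: o_def)
      qed
      have cG3: "continuous_on ?O (\<lambda>p. Gamma ((1 - fst p) * snd p))"
      proof -
        have "continuous_on ?O (Gamma \<circ> (\<lambda>p. (1 - fst p) * snd p))"
          by (intro continuous_on_compose continuous_intros continuous_on_Gamma)
             (auto simp: pos_not_nonpos_Int zero_less_mult_iff)
        then show ?thesis by (simp add: o_def)
      qed
      show ?thesis unfolding beta_eq
        by (intro continuous_intros cG1 cG2 cG3) (use y in \<open>auto simp: Gamma_real_nz\<close>)
    qed
  qed
qed


theorem theorem8:
  shows "mixture gauss_kernel \<in> measurable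
           (borel_of (subtopology (weak_conv_topology (param_space UNIV))
                        (Dk (param_space UNIV) (UNIV \<times> {0}))))
           (borel_of (hellinger_topology UNIV))
       \<and> mixture gamma_kernel \<in> measurable
           (borel_of (subtopology (weak_conv_topology (param_space {0..}))
                        (Dk (param_space {0..}) ({0..} \<times> {0} \<union> {0} \<times> {0..}))))
           (borel_of (hellinger_topology {0..}))
       \<and> mixture beta_kernel \<in> measurable
           (borel_of (subtopology (weak_conv_topology (param_space {0..1}))
                        (Dk (param_space {0..1}) ({0..1} \<times> {0} \<union> {0, 1} \<times> {0..}))))
           (borel_of (hellinger_topology {0..1}))"
proof (intro conjI)
  show "mixture gauss_kernel \<in> measurable
           (borel_of (subtopology (weak_conv_topology (param_space UNIV))
                        (Dk (param_space UNIV) (UNIV \<times> {0}))))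
           (borel_of (hellinger_topology UNIV))"
    by (rule mixk.mixture_measurable[OF gauss_mixk])
  show "mixture gamma_kernel \<in> measurable
           (borel_of (subtopology (weak_conv_topology (param_space {0..}))
                        (Dk (param_space {0..}) ({0..} \<times> {0} \<union> {0} \<times> {0..}))))
           (borel_of (hellinger_topology {0..}))"
    by (rule mixk.mixture_measurable[OF gamma_mixk])
  show "mixture beta_kernel \<in> measurable
           (borel_of (subtopology (weak_conv_topology (param_space {0..1}))
                        (Dk (param_space {0..1}) ({0..1} \<times> {0} \<union> {0, 1} \<times> {0..}))))
           (borel_of (hellinger_topology {0..1}))"
    by (rule mixk.mixture_measurable[OF beta_mixk])
qed

end
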